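(* For all integers $n>k\ge1$, the set $C_{n,k}=\{\pi\in\mathfrak{S}_n:\ |\mathrm{cDes}(\pi^{-1})|=k\}$ is cyclic Schur-positive.
   Context: For $\pi\in\mathfrak{S}_n$ (one-line notation), $\mathrm{Des}(\pi)=\{i\in[n-1]:\pi(i)>\pi(i+1)\}$ and $\mathrm{cDes}(\pi)=\{i\in[n]:\pi(i)>\pi(i+1)\}$ with $\pi(n+1):=\pi(1)$. $\mathbf{x}^J=\prod_{i\in J}x_i$; $i+J=\{i+j\bmod n:j\in J\}\subseteq[n]$. Cyclic Schur-positive: for a skew shape $\lambda/\mu$ with $n$ cells, $\mathrm{Des}(T)$ for $T\in\mathrm{SYT}(\lambda/\mu)$ is the set of $i\in[n-1]$ with $i+1$ in a strictly lower row than $i$. A cyclic descent extension on $\mathrm{SYT}(\lambda/\mu)$ is a pair $(\mathrm{cDes},\psi)$, $\psi$ a bijection, with $\mathrm{cDes}(T)\cap[n-1]=\mathrm{Des}(T)$, $\mathrm{cDes}(\psi T)=1+\mathrm{cDes}(T)$, $\emptyset\ne\mathrm{cDes}(T)\ne[n]$; it exists iff $\lambda/\mu$ is not a connected ribbon, and $\sum_T\mathbf{x}^{\mathrm{cDes}(T)}$ is then independent of the choice. $A\subseteq\mathfrak{S}_n$ is cyclic Schur-positive if $\sum_{\pi\in A}\mathbf{x}^{\mathrm{cDes}(\pi)}=\sum m_{\lambda/\mu}\sum_{T\in\mathrm{SYT}(\lambda/\mu)}\mathbf{x}^{\mathrm{cDes}(T)}$ for some nonnegative integers $m_{\lambda/\mu}$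 indexed by skew shapes with $n$ cells that are not connected ribbons. *)

theory Defs
  imports "HOL-Combinatorics.Permutations" "HOL-Library.Multiset"
begin

(* cyclic successor on [n] = {1..n}: i \<mapsto> i+1, n \<mapsto> 1 *)
definition csucc :: "nat \<Rightarrow> nat \<Rightarrow> nat" where
  "csucc n i = i mod n + 1"

definition perm_cDes :: "nat \<Rightarrow> (nat \<Rightarrow> nat) \<Rightarrow> nat set" where
  "perm_cDes n \<pi> = {i \<in> {1..n}. \<pi> i > \<pi> (csucc n i)}"

definition cshift :: "nat \<Rightarrow> nat set \<Rightarrow> nat set" where
  "cshift n J = csucc n ` J"

definition C_set :: "nat \<Rightarrow> nat \<Rightarrow> (nat \<Rightarrow> nat) set" where
  "C_set n k = {\<pi>. \<pi> permutes {1..n} \<and> card (perm_cDes n (inv \<pi>)) = k}"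

(* ---------- Skew shapes (English notation, 0-indexed cells (row, column)) ---------- *)

definition is_partition :: "nat list \<Rightarrow> bool" where
  "is_partition p \<longleftrightarrow> sorted_wrt (\<ge>) p \<and> (\<forall>x \<in> set p. 0 < x)"

definition part_at :: "nat list \<Rightarrow> nat \<Rightarrow> nat" where
  "part_at p i = (if i < length p then p ! i else 0)"

definition skew_shape :: "nat list \<Rightarrow> nat list \<Rightarrow> bool" where
  "skew_shape lam mu \<longleftrightarrow> is_partition lam \<and> is_partition mu \<and>
     length mu \<le> length lam \<and> (\<forall>i < length mu. mu ! i \<le> lam ! i)"

definition cells :: "nat list \<Rightarrow> nat list \<Rightarrow> (nat \<times> nat) set" where
  "cells lam mu = {(i, j). i < length lam \<and> part_at mu i \<le> j \<and> j < part_at lam i}"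

definition adjacent :: "nat \<times> nat \<Rightarrow> nat \<times> nat \<Rightarrow> bool" where
  "adjacent c d \<longleftrightarrow> (fst c = fst d \<and> (snd d = snd c + 1 \<or> snd c = snd d + 1)) \<or>
                     (snd c = snd d \<and> (fst d = fst c + 1 \<or> fst c = fst d + 1))"

definition connected_ribbon :: "nat list \<Rightarrow> nat list \<Rightarrow> bool" where
  "connected_ribbon lam mu \<longleftrightarrow>
     (\<forall>c \<in> cells lam mu. \<forall>d \<in> cells lam mu.
        (\<lambda>x y. x \<in> cells lam mu \<and> y \<in> cells lam mu \<and> adjacent x y)\<^sup>*\<^sup>* c d) \<and>
     \<not> (\<exists>i j. {(i, j), (i + 1, j), (i, j + 1), (i + 1, j + 1)} \<subseteq> cells lam mu)"

definition SYT :: "nat list \<Rightarrow> nat list \<Rightarrow> ((nat \<times> nat) \<Rightarrow> nat) set" where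
  "SYT lam mu = {T. bij_betw T (cells lam mu) {1..card (cells lam mu)} \<and>
      (\<forall>c \<in> cells lam mu. \<forall>d \<in> cells lam mu.
          (fst c = fst d \<and> snd c < snd d \<longrightarrow> T c < T d) \<and>
          (snd c = snd d \<and> fst c < fst d \<longrightarrow> T c < T d)) \<and>
      (\<forall>c. c \<notin> cells lam mu \<longrightarrow> T c = 0)}"

definition tab_Des :: "nat list \<Rightarrow> nat list \<Rightarrow> ((nat \<times> nat) \<Rightarrow> nat) \<Rightarrow> nat set" where
  "tab_Des lam mu T = {i \<in> {1..card (cells lam mu) - 1}.
      \<exists>c \<in> cells lam mu. \<exists>d \<in> cells lam mu. T c = i \<and> T d = i + 1 \<and> fst c < fst d}"

definition cyclic_descent_ext ::
  "nat \<Rightarrow> 'a set \<Rightarrow> ('a \<Rightarrow> nat set) \<Rightarrow> ('a \<Rightarrow> nat set) \<Rightarrow> ('a \<Rightarrow> 'a) \<Rightarrow> bool" where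
  "cyclic_descent_ext n X Des cD \<psi> \<longleftrightarrow> bij_betw \<psi> X X \<and>
     (\<forall>T \<in> X. cD T \<subseteq> {1..n} \<and> cD T \<inter> {1..n-1} = Des T \<and>
               cD (\<psi> T) = cshift n (cD T) \<and> cD T \<noteq> {} \<and> cD T \<noteq> {1..n})"

(* A is cyclic Schur-positive: the formal sum of x^{cDes(pi)} (a multiset of subsets of [n])
   equals a nonnegative integer combination (the multiset `shapes' records multiplicities)
   of the sums of x^{cDes(T)} over SYT of skew shapes with n cells that are not connected
   ribbons, for cyclic descent extensions on them *)
definition cyclic_Schur_positive :: "nat \<Rightarrow> (nat \<Rightarrow> nat) set \<Rightarrow> bool" where
  "cyclic_Schur_positive n A \<longleftrightarrow>
    (\<exists>shapes :: (nat list \<times> nat list) multiset.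
     \<exists>cD :: nat list \<times> nat list \<Rightarrow> ((nat \<times> nat) \<Rightarrow> nat) \<Rightarrow> nat set.
       (\<forall>s \<in># shapes. skew_shape (fst s) (snd s) \<and> card (cells (fst s) (snd s)) = n \<and>
           \<not> connected_ribbon (fst s) (snd s) \<and>
           (\<exists>\<psi>. cyclic_descent_ext n (SYT (fst s) (snd s)) (tab_Des (fst s) (snd s)) (cD s) \<psi>)) \<and>
       image_mset (perm_cDes n) (mset_set A) =
         (\<Sum>s \<in># shapes. image_mset (cD s) (mset_set (SYT (fst s) (snd s)))))"

end

theory Submission
  imports Defs
begin

lemma bij_betw_upd_insert:
  assumes "bij_betw f A B" "x \<notin> A" "y \<notin> B"
  shows "bij_betw (f(x := y)) (insert x A) (insert y B)"
proof -
  have e: "(f(x := y)) ` A = f ` A" using assms(2) by (auto simp: image_def)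
  have "inj_on (f(x := y)) A" using assms(1,2) unfolding bij_betw_def inj_on_def by auto
  then show ?thesis using assms e unfolding bij_betw_def by (auto simp: inj_on_insert)
qed

lemma mset_bij_exists:
  assumes "finite X" "finite Y" "image_mset f (mset_set X) = image_mset g (mset_set Y)"
  shows "\<exists>\<psi>. bij_betw \<psi> X Y \<and> (\<forall>x\<in>X. g (\<psi> x) = f x)"
  using assms
proof (induction X arbitrary: Y rule: finite_induct)
  case empty
  then have "Y = {}" by (metis image_mset_is_empty_iff mset_set_empty_iff)
  then show ?case by (intro exI[of _ "\<lambda>_. undefined"]) (simp add: bij_betw_def)
next
  case (insert x X)
  have "f x \<in># image_mset g (mset_set Y)"
    using insert.prems(2) insert.hyps by (metis image_mset_add_mset mset_set.insert(1) insert.hyps(1) union_single_eq_member)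
  then obtain y where y: "y \<in> Y" "g y = f x" using insert.prems(1) by auto
  have "mset_set (Y - {y}) = mset_set Y - {#y#}"
    using y insert.prems(1) by (simp add: mset_set_Diff)
  then have "image_mset g (mset_set (Y - {y})) = image_mset g (mset_set Y) - {#g y#}"
    using y insert.prems(1) by (simp add: image_mset_Diff)
  also have "\<dots> = image_mset f (mset_set X)"
    using insert.prems(2) insert.hyps y by (metis add_mset_remove_trivial image_mset_add_mset mset_set.insert(1))
  finally obtain \<psi> where p: "bij_betw \<psi> X (Y - {y})" "\<forall>x\<in>X. g (\<psi> x) = f x"
    using insert.IH[of "Y - {y}"] insert.prems(1) by auto
  have "bij_betw (\<psi>(x := y)) (insert x X) (insert y (Y - {y}))"
    using p(1) insert.hyps by (intro bij_betw_upd_insert) auto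
  moreover have "insert y (Y - {y}) = Y" using y by auto
  ultimately have "bij_betw (\<psi>(x := y)) (insert x X) Y" by simp
  moreover have "\<forall>z\<in>insert x X. g ((\<psi>(x := y)) z) = f z" using p(2) y insert.hyps by auto
  ultimately show ?case by blast
qed

lemma lift_lemma:
  fixes X :: "'a set" and Z :: "'b set" and F :: "'b \<Rightarrow> nat set"
  assumes finX: "finite X" and finZ: "finite Z"
   and shiftZ: "image_mset (cshift n \<circ> F) (mset_set Z) = image_mset F (mset_set Z)"
   and good: "\<forall>z\<in>Z. F z \<subseteq> {1..n} \<and> F z \<noteq> {} \<and> F z \<noteq> {1..n}"
   and restr: "image_mset (\<lambda>z. F z \<inter> {1..n-1}) (mset_set Z) = image_mset Des (mset_set X)"
  shows "\<exists>cD \<psi>. cyclic_descent_ext n X Des cD \<psi> \<and> image_mset cD (mset_set X) = image_mset F (mset_set Z)"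
proof -
  obtain \<beta> where b: "bij_betw \<beta> X Z" "\<forall>x\<in>X. F (\<beta> x) \<inter> {1..n-1} = Des x"
    using mset_bij_exists[OF finX finZ restr[symmetric]] by auto
  define cD where "cD = F \<circ> \<beta>"
  have imX: "image_mset \<beta> (mset_set X) = mset_set Z"
    using b(1) by (simp add: bij_betw_def image_mset_mset_set)
  have img: "image_mset cD (mset_set X) = image_mset F (mset_set Z)"
    unfolding cD_def by (simp only: multiset.map_comp[symmetric] imX)
  have "image_mset (cshift n \<circ> cD) (mset_set X) = image_mset cD (mset_set X)"
    unfolding cD_def using shiftZ imX
    by (simp only: multiset.map_comp[symmetric] comp_assoc[symmetric])
  then obtain \<psi> where p: "bij_betw \<psi> X X" "\<forall>x\<in>X. cD (\<psi> x) = cshift n (cD x)"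
    using mset_bij_exists[OF finX finX] by force
  have "cyclic_descent_ext n X Des cD \<psi>"
    unfolding cyclic_descent_ext_def
  proof (intro conjI ballI)
    fix T assume T: "T \<in> X"
    then have bT: "\<beta> T \<in> Z" using b(1) by (auto simp: bij_betw_def)
    show "cD T \<subseteq> {1..n}" "cD T \<noteq> {}" "cD T \<noteq> {1..n}" using good bT by (auto simp: cD_def)
    show "cD T \<inter> {1..n - 1} = Des T" using b(2) T by (simp add: cD_def)
    show "cD (\<psi> T) = cshift n (cD T)" using p(2) T by simp
  qed (fact p(1))
  then show ?thesis using img by blast
qed

definition Pn :: "nat \<Rightarrow> (nat \<Rightarrow> nat) set" where "Pn n = {\<sigma>. \<sigma> permutes {1..n}}"
definition ides :: "nat \<Rightarrow> (nat \<Rightarrow> nat) \<Rightarrow> nat set" where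
  "ides n \<sigma> = {i \<in> {1..n-1}. inv \<sigma> (Suc i) < inv \<sigma> i}"
definition ldes :: "nat \<Rightarrow> (nat \<Rightarrow> nat) \<Rightarrow> nat set" where
  "ldes n \<sigma> = {p \<in> {1..n-2}. \<sigma> (Suc p) < \<sigma> p}"
definition rotv :: "nat \<Rightarrow> nat \<Rightarrow> nat \<Rightarrow> nat" where
  "rotv n v x = (x + n - v - 1) mod n + 1"

definition pb :: "nat set \<Rightarrow> nat \<Rightarrow> nat" where "pb K p = card {j \<in> K. j < p}"
definition cls :: "nat \<Rightarrow> nat set \<Rightarrow> (nat \<Rightarrow> nat) \<Rightarrow> (nat \<Rightarrow> nat) set" where
  "cls n K f = {\<sigma> \<in> Pn n. \<forall>p \<in> {1..n-1} - K. f (\<sigma> p) < f (\<sigma> (Suc p))}"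
definition blk :: "nat set \<Rightarrow> (nat \<Rightarrow> nat) \<Rightarrow> nat \<Rightarrow> nat" where
  "blk K \<sigma> x = pb K (inv \<sigma> x)"
definition bst :: "nat \<Rightarrow> nat set \<Rightarrow> nat \<Rightarrow> nat" where
  "bst n K t = card {p \<in> {1..n}. pb K p < t}"
definition rk :: "nat \<Rightarrow> (nat \<Rightarrow> nat) \<Rightarrow> (nat \<Rightarrow> nat) \<Rightarrow> nat \<Rightarrow> nat" where
  "rk n f b x = card {y \<in> {1..n}. b y = b x \<and> f y < f x}"
definition iota :: "nat \<Rightarrow> nat set \<Rightarrow> (nat \<Rightarrow> nat) \<Rightarrow> (nat \<Rightarrow> nat) \<Rightarrow> nat \<Rightarrow> nat" where
  "iota n K f b x = (if x \<in> {1..n} then bst n K (b x) + rk n f b x + 1 else x)"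

lemma pb_mono: "finite K \<Longrightarrow> p \<le> q \<Longrightarrow> pb K p \<le> pb K q"
  unfolding pb_def by (intro card_mono) auto

lemma pb_Suc: "finite K \<Longrightarrow> pb K (Suc p) = pb K p + (if p \<in> K then 1 else 0)"
proof -
  assume K: "finite K"
  have "{j \<in> K. j < Suc p} = {j \<in> K. j < p} \<union> (if p \<in> K then {p} else {})" by (auto simp: less_Suc_eq)
  then show ?thesis using K unfolding pb_def by (auto simp: card_insert_if)
qed

lemma chain_lt:
  fixes g :: "nat \<Rightarrow> nat"
  assumes "\<And>r. p \<le> r \<Longrightarrow> r < q \<Longrightarrow> g r < g (Suc r)" "p < q"
  shows "g p < g q"
  using assms
proof (induction q)
  case 0 then show ?case by simp
next
  case (Suc q)
  show ?case
  proof (cases "p = q")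
    case True then show ?thesis using Suc.prems by auto
  next
    case False
    then have "g p < g q" using Suc by auto
    also have "g q < g (Suc q)" using Suc.prems False by auto
    finally show ?thesis .
  qed
qed

lemma downclosed_interval:
  assumes "D \<subseteq> {1..m}" "\<And>p q. p \<in> D \<Longrightarrow> 1 \<le> q \<Longrightarrow> q \<le> p \<Longrightarrow> q \<in> D"
  shows "D = {1..card D}"
proof (cases "D = {}")
  case True then show ?thesis by simp
next
  case False
  have fin: "finite D" using assms(1) finite_subset by blast
  define M where "M = Max D"
  have "M \<in> D" using False fin M_def by simp
  have "D = {1..M}"
  proof
    show "D \<subseteq> {1..M}" using assms(1) fin M_def by auto
    show "{1..M} \<subseteq> D" using assms(2) \<open>M \<in> D\<close> by auto
  qed
  then show ?thesis by simp
qed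

lemma pb_lt_iff:
  assumes K: "finite K" and p: "p \<in> {1..n}"
  shows "pb K p < t \<longleftrightarrow> p \<le> bst n K t"
proof -
  let ?D = "{p \<in> {1..n}. pb K p < t}"
  have "?D = {1..card ?D}"
    by (rule downclosed_interval[where m = n]) (auto intro: le_less_trans[OF pb_mono[OF K]])
  then have "p \<in> ?D \<longleftrightarrow> p \<in> {1..bst n K t}" unfolding bst_def by simp
  then show ?thesis using p by auto
qed

lemma pb_eq_iff:
  assumes K: "finite K" and p: "p \<in> {1..n}"
  shows "pb K p = t \<longleftrightarrow> bst n K t < p \<and> p \<le> bst n K (Suc t)"
  using pb_lt_iff[OF K p, of t] pb_lt_iff[OF K p, of "Suc t"] by auto

lemma bst_le: "bst n K t \<le> n"
  unfolding bst_def by (rule order.trans[OF card_mono[of "{1..n}"]]) auto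

lemma bst_mono: "t \<le> t' \<Longrightarrow> bst n K t \<le> bst n K t'"
  unfolding bst_def by (intro card_mono) auto

lemma block_card:
  assumes K: "finite K"
  shows "card {p \<in> {1..n}. pb K p = t} = bst n K (Suc t) - bst n K t"
proof -
  have "{p \<in> {1..n}. pb K p < Suc t} = {p \<in> {1..n}. pb K p < t} \<union> {p \<in> {1..n}. pb K p = t}" by auto
  then have "bst n K (Suc t) = bst n K t + card {p \<in> {1..n}. pb K p = t}"
    unfolding bst_def by (subst card_Un_disjoint[symmetric]) auto
  then show ?thesis by simp
qed

lemma Pn_perm: "\<sigma> \<in> Pn n \<Longrightarrow> \<sigma> permutes {1..n}" by (simp add: Pn_def)

lemma cls_perm: "\<sigma> \<in> cls n K f \<Longrightarrow> \<sigma> permutes {1..n}" by (simp add: cls_def Pn_def)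

lemma perm_in: "\<sigma> permutes {1..n} \<Longrightarrow> x \<in> {1..n} \<Longrightarrow> \<sigma> x \<in> {1..n}"
  using permutes_in_image[of \<sigma> "{1..n}" x] by blast

lemma perm_inv_in: "\<sigma> permutes {1..n} \<Longrightarrow> x \<in> {1..n} \<Longrightarrow> inv \<sigma> x \<in> {1..n}"
  using permutes_in_image[OF permutes_inv, of \<sigma> "{1..n}" x] by blast

lemma cls_block_lt:
  assumes K: "finite K" and \<sigma>: "\<sigma> \<in> cls n K f" and pq: "p < q" "1 \<le> p" "q \<le> n"
    and eq: "pb K p = pb K q"
  shows "f (\<sigma> p) < f (\<sigma> q)"
proof (rule chain_lt[of p q "\<lambda>r. f (\<sigma> r)", OF _ pq(1)])
  fix r assume r: "p \<le> r" "r < q"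
  have "r \<notin> K"
  proof
    assume "r \<in> K"
    then have "pb K (Suc r) = pb K r + 1" using pb_Suc[OF K] by simp
    moreover have "pb K p \<le> pb K r" using pb_mono[OF K r(1)] .
    moreover have "pb K (Suc r) \<le> pb K q" using pb_mono[OF K] r(2) by simp
    ultimately show False using eq by simp
  qed
  then show "f (\<sigma> r) < f (\<sigma> (Suc r))" using \<sigma> r pq unfolding cls_def by auto
qed

lemma cls_inv_eq:
  assumes K: "finite K" and \<sigma>: "\<sigma> \<in> cls n K f" and f: "inj_on f {1..n}" and x: "x \<in> {1..n}"
  shows "inv \<sigma> x = iota n K f (blk K \<sigma>) x"
proof -
  have sp: "\<sigma> permutes {1..n}" using cls_perm[OF \<sigma>] .
  define q where "q = inv \<sigma> x"
  define t where "t = pb K q"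
  define b where "b = blk K \<sigma>"
  have q: "q \<in> {1..n}" using perm_inv_in[OF sp x] q_def by simp
  have sq: "\<sigma> q = x" using q_def sp by (simp add: permutes_inverses(1))
  have bx: "b x = t" by (simp add: b_def blk_def t_def q_def)
  define B where "B = {p \<in> {1..n}. pb K p = t \<and> p < q}"
  have setB: "{y \<in> {1..n}. b y = b x \<and> f y < f x} = \<sigma> ` B"
  proof
    show "\<sigma> ` B \<subseteq> {y \<in> {1..n}. b y = b x \<and> f y < f x}"
    proof
      fix y assume "y \<in> \<sigma> ` B"
      then obtain p where p: "p \<in> B" "y = \<sigma> p" by auto
      have "inv \<sigma> y = p" using p sp by (simp add: permutes_inverses(2))
      then have "b y = t" using p by (simp add: b_def blk_def B_def)
      moreover have "f y < f x" using cls_block_lt[OF K \<sigma>, of p q] p q sq unfolding B_def t_def by auto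
      moreover have "y \<in> {1..n}" using p perm_in[OF sp] unfolding B_def by auto
      ultimately show "y \<in> {y \<in> {1..n}. b y = b x \<and> f y < f x}" using bx by simp
    qed
  next
    show "{y \<in> {1..n}. b y = b x \<and> f y < f x} \<subseteq> \<sigma> ` B"
    proof
      fix y assume y: "y \<in> {y \<in> {1..n}. b y = b x \<and> f y < f x}"
      define p where "p = inv \<sigma> y"
      have p: "p \<in> {1..n}" using perm_inv_in[OF sp] y p_def by auto
      have sy: "\<sigma> p = y" using p_def sp by (simp add: permutes_inverses(1))
      have pt: "pb K p = t" using y bx by (simp add: b_def blk_def p_def)
      have "p < q"
      proof (rule ccontr)
        assume "\<not> p < q"
        then have "q < p \<or> q = p" by auto
        then show False
        proof
          assume "q < p"
          then have "f x < f y" using cls_block_lt[OF K \<sigma>, of q p] p q sq sy pt t_def by auto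
          then show False using y by auto
        next
          assume "q = p" then show False using sq sy y by auto
        qed
      qed
      then have "p \<in> B" using p pt by (simp add: B_def)
      then show "y \<in> \<sigma> ` B" using sy by auto
    qed
  qed
  have "inj_on \<sigma> B" using permutes_inj[OF sp] by (auto simp: inj_on_def inj_def)
  then have rkB: "rk n f b x = card B" unfolding rk_def using setB by (simp add: card_image)
  have un: "{p \<in> {1..n}. p < q} = {p \<in> {1..n}. pb K p < t} \<union> B"
  proof
    show "{p \<in> {1..n}. p < q} \<subseteq> {p \<in> {1..n}. pb K p < t} \<union> B"
    proof
      fix p assume p: "p \<in> {p \<in> {1..n}. p < q}"
      then have "pb K p \<le> t" using pb_mono[OF K, of p q] t_def by auto
      then show "p \<in> {p \<in> {1..n}. pb K p < t} \<union> B" using p by (auto simp: B_def)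
    qed
    show "{p \<in> {1..n}. pb K p < t} \<union> B \<subseteq> {p \<in> {1..n}. p < q}"
    proof
      fix p assume p: "p \<in> {p \<in> {1..n}. pb K p < t} \<union> B"
      show "p \<in> {p \<in> {1..n}. p < q}"
      proof (cases "p \<in> B")
        case True then show ?thesis by (auto simp: B_def)
      next
        case False
        then have p1: "p \<in> {1..n}" "pb K p < t" using p by auto
        have "p < q"
        proof (rule ccontr)
          assume "\<not> p < q"
          then have "pb K q \<le> pb K p" using pb_mono[OF K, of q p] by auto
          then show False using p1 t_def by auto
        qed
        then show ?thesis using p1 by auto
      qed
    qed
  qed
  have "card {p \<in> {1..n}. p < q} = q - 1"
  proof -
    have "{p \<in> {1..n}. p < q} = {1..<q}" using q by auto
    then show ?thesis by simp
  qed
  moreover have "card ({p \<in> {1..n}. pb K p < t} \<union> B) = bst n K t + card B"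
    unfolding bst_def by (subst card_Un_disjoint) (auto simp: B_def)
  ultimately have "q = bst n K t + card B + 1" using un q by auto
  then show ?thesis using x rkB bx unfolding iota_def q_def b_def by simp
qed

lemma cls_blk_inj:
  assumes K: "finite K" and f: "inj_on f {1..n}" and s: "\<sigma> \<in> cls n K f" and t: "\<tau> \<in> cls n K f"
    and eq: "blk K \<sigma> = blk K \<tau>"
  shows "\<sigma> = \<tau>"
proof -
  have sp: "\<sigma> permutes {1..n}" and tp: "\<tau> permutes {1..n}" using cls_perm s t by auto
  have "inv \<sigma> = inv \<tau>"
  proof
    fix x show "inv \<sigma> x = inv \<tau> x"
    proof (cases "x \<in> {1..n}")
      case True
      then show ?thesis using cls_inv_eq[OF K s f True] cls_inv_eq[OF K t f True] eq by simp
    next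
      case False
      then show ?thesis using permutes_inv[OF sp] permutes_inv[OF tp] by (simp add: permutes_not_in)
    qed
  qed
  then show ?thesis using permutes_inv_inv[OF sp] permutes_inv_inv[OF tp] by metis
qed

lemma rk_mono_strict:
  assumes "x \<in> {1..n}" "y \<in> {1..n}" "b y = b x" "f y < f x"
  shows "rk n f b y < rk n f b x"
proof -
  have "{z \<in> {1..n}. b z = b y \<and> f z < f y} \<subset> {z \<in> {1..n}. b z = b x \<and> f z < f x}"
  proof
    show "{z \<in> {1..n}. b z = b y \<and> f z < f y} \<subseteq> {z \<in> {1..n}. b z = b x \<and> f z < f x}"
      using assms by auto
    have "y \<in> {z \<in> {1..n}. b z = b x \<and> f z < f x}" using assms by auto
    moreover have "y \<notin> {z \<in> {1..n}. b z = b y \<and> f z < f y}" by auto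
    ultimately show "{z \<in> {1..n}. b z = b y \<and> f z < f y} \<noteq> {z \<in> {1..n}. b z = b x \<and> f z < f x}"
      by blast
  qed
  then show ?thesis unfolding rk_def by (intro psubset_card_mono) auto
qed

lemma iota_props:
  assumes K: "finite K" and s0: "\<sigma>0 permutes {1..n}" and f: "inj_on f {1..n}"
  shows "iota n K f (blk K \<sigma>0) permutes {1..n}"
    and "inv (iota n K f (blk K \<sigma>0)) \<in> cls n K f"
    and "blk K (inv (iota n K f (blk K \<sigma>0))) = blk K \<sigma>0"
proof -
  define b where "b = blk K \<sigma>0"
  define \<iota> where "\<iota> = iota n K f b"
  have fib: "card {y \<in> {1..n}. b y = t} = bst n K (Suc t) - bst n K t" for t
  proof -
    have "{y \<in> {1..n}. b y = t} = \<sigma>0 ` {p \<in> {1..n}. pb K p = t}"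
    proof
      show "{y \<in> {1..n}. b y = t} \<subseteq> \<sigma>0 ` {p \<in> {1..n}. pb K p = t}"
      proof
        fix y assume y: "y \<in> {y \<in> {1..n}. b y = t}"
        have "\<sigma>0 (inv \<sigma>0 y) = y" using s0 by (simp add: permutes_inverses(1))
        moreover have "inv \<sigma>0 y \<in> {p \<in> {1..n}. pb K p = t}"
          using y perm_inv_in[OF s0] by (auto simp: b_def blk_def)
        ultimately show "y \<in> \<sigma>0 ` {p \<in> {1..n}. pb K p = t}" by (metis image_eqI)
      qed
      show "\<sigma>0 ` {p \<in> {1..n}. pb K p = t} \<subseteq> {y \<in> {1..n}. b y = t}"
        using perm_in[OF s0] s0 by (auto simp: b_def blk_def permutes_inverses(2))
    qed
    moreover have "inj_on \<sigma>0 {p \<in> {1..n}. pb K p = t}"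
      using permutes_inj[OF s0] by (auto simp: inj_on_def inj_def)
    ultimately show ?thesis using block_card[OF K, of n t] by (simp add: card_image)
  qed
  have rklt: "rk n f b x < bst n K (Suc (b x)) - bst n K (b x)" if x: "x \<in> {1..n}" for x
  proof -
    have "{y \<in> {1..n}. b y = b x \<and> f y < f x} \<subset> {y \<in> {1..n}. b y = b x}"
      using x by auto
    then have "rk n f b x < card {y \<in> {1..n}. b y = b x}"
      unfolding rk_def by (intro psubset_card_mono) auto
    then show ?thesis using fib by simp
  qed
  have bnd: "bst n K (b x) < \<iota> x \<and> \<iota> x \<le> bst n K (Suc (b x))" if x: "x \<in> {1..n}" for x
    using rklt[OF x] x unfolding \<iota>_def iota_def by auto
  have iin: "\<iota> x \<in> {1..n}" if x: "x \<in> {1..n}" for x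
    using bnd[OF x] bst_le[of n K "Suc (b x)"] by auto
  have pbi: "pb K (\<iota> x) = b x" if x: "x \<in> {1..n}" for x
    using pb_eq_iff[OF K iin[OF x]] bnd[OF x] by auto
  have inj: "inj_on \<iota> {1..n}"
  proof (rule inj_onI)
    fix x y assume x: "x \<in> {1..n}" and y: "y \<in> {1..n}" and e: "\<iota> x = \<iota> y"
    have bxy: "b x = b y" using pbi[OF x] pbi[OF y] e by simp
    then have rke: "rk n f b x = rk n f b y" using e x y unfolding \<iota>_def iota_def by simp
    show "x = y"
    proof (rule ccontr)
      assume "x \<noteq> y"
      then have "f x \<noteq> f y" using f x y by (auto dest: inj_onD)
      then have "f x < f y \<or> f y < f x" by auto
      then show False
        using rk_mono_strict[OF x y bxy[symmetric], where f=f] rk_mono_strict[OF y x bxy, where f=f] rke by auto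
    qed
  qed
  have img: "\<iota> ` {1..n} = {1..n}"
    by (rule endo_inj_surj) (use iin inj in auto)
  have out: "\<iota> x = x" if "x \<notin> {1..n}" for x using that unfolding \<iota>_def iota_def by (simp only: if_False)
  have ip: "\<iota> permutes {1..n}"
    by (rule bij_imp_permutes) (use inj img out in \<open>auto simp: bij_betw_def\<close>)
  then show "iota n K f (blk K \<sigma>0) permutes {1..n}" by (simp add: \<iota>_def b_def)
  have ii: "inv (inv \<iota>) = \<iota>" using permutes_inv_inv[OF ip] .
  have blkeq: "blk K (inv \<iota>) = b"
  proof
    fix x show "blk K (inv \<iota>) x = b x"
    proof (cases "x \<in> {1..n}")
      case True then show ?thesis using pbi[OF True] ii by (simp add: blk_def)
    next
      case False
      have "inv \<sigma>0 x = x" using False permutes_inv[OF s0] by (simp add: permutes_not_in)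
      then show ?thesis using False ii out by (simp add: blk_def b_def)
    qed
  qed
  then show "blk K (inv (iota n K f (blk K \<sigma>0))) = blk K \<sigma>0" by (simp add: \<iota>_def b_def)
  have "inv \<iota> \<in> cls n K f"
    unfolding cls_def Pn_def
  proof (intro CollectI conjI ballI)
    show "inv \<iota> permutes {1..n}" using permutes_inv[OF ip] .
    fix p assume p: "p \<in> {1..n-1} - K"
    define x where "x = inv \<iota> p"
    define y where "y = inv \<iota> (Suc p)"
    have p1: "p \<in> {1..n}" "Suc p \<in> {1..n}" using p by auto
    have x: "x \<in> {1..n}" "\<iota> x = p" using p1 perm_inv_in[OF ip] ip x_def
      by (auto simp: permutes_inverses(1))
    have y: "y \<in> {1..n}" "\<iota> y = Suc p" using p1 perm_inv_in[OF ip] ip y_def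
      by (auto simp: permutes_inverses(1))
    have bxy: "b y = b x" using pbi[OF x(1)] pbi[OF y(1)] x(2) y(2) pb_Suc[OF K, of p] p by auto
    have rkxy: "rk n f b y = Suc (rk n f b x)" using x y bxy unfolding \<iota>_def iota_def by simp
    have "x \<noteq> y" using x(2) y(2) by auto
    then have "f x \<noteq> f y" using f x(1) y(1) by (auto dest: inj_onD)
    moreover have "\<not> f y < f x" using rk_mono_strict[OF x(1) y(1) bxy, where f=f] rkxy by auto
    ultimately show "f (inv \<iota> p) < f (inv \<iota> (Suc p))" using x_def y_def by auto
  qed
  then show "inv (iota n K f (blk K \<sigma>0)) \<in> cls n K f" by (simp add: \<iota>_def b_def)
qed

lemma finite_cls: "finite (cls n K f)"
proof -
  have "cls n K f \<subseteq> {\<sigma>. \<sigma> permutes {1..n}}" by (auto simp: cls_def Pn_def)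
  then show ?thesis using finite_permutations[of "{1..n}"] finite_subset by blast
qed

lemma finite_Pn: "finite (Pn n)"
  using finite_permutations[of "{1..n}"] by (simp add: Pn_def)

lemma cls_image_mset_eq:
  assumes K: "finite K" and f1: "inj_on f1 {1..n}" and f2: "inj_on f2 {1..n}"
    and G1: "\<And>\<sigma>. \<sigma> \<in> cls n K f1 \<Longrightarrow> Q (blk K \<sigma>) \<Longrightarrow> G \<sigma> = W (blk K \<sigma>)"
    and G2: "\<And>\<sigma>. \<sigma> \<in> cls n K f2 \<Longrightarrow> Q (blk K \<sigma>) \<Longrightarrow> G \<sigma> = W (blk K \<sigma>)"
  shows "image_mset G (mset_set {\<sigma> \<in> cls n K f1. Q (blk K \<sigma>)})
       = image_mset G (mset_set {\<sigma> \<in> cls n K f2. Q (blk K \<sigma>)})"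
proof -
  define A1 where "A1 = {\<sigma> \<in> cls n K f1. Q (blk K \<sigma>)}"
  define A2 where "A2 = {\<sigma> \<in> cls n K f2. Q (blk K \<sigma>)}"
  define \<Theta> where "\<Theta> = (\<lambda>\<sigma>. inv (iota n K f2 (blk K \<sigma>)))"
  have Th: "\<Theta> \<sigma> \<in> cls n K f2 \<and> blk K (\<Theta> \<sigma>) = blk K \<sigma>" if "\<sigma> \<in> cls n K f1" for \<sigma>
    using iota_props[OF K cls_perm[OF that] f2] by (simp add: \<Theta>_def)
  have inj: "inj_on \<Theta> A1"
  proof (rule inj_onI)
    fix \<sigma> \<tau> assume "\<sigma> \<in> A1" "\<tau> \<in> A1" "\<Theta> \<sigma> = \<Theta> \<tau>"
    then have a: "\<sigma> \<in> cls n K f1" "\<tau> \<in> cls n K f1" "\<Theta> \<sigma> = \<Theta> \<tau>" unfolding A1_def by auto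
    have "blk K \<sigma> = blk K \<tau>" using Th[OF a(1)] Th[OF a(2)] a(3) by simp
    then show "\<sigma> = \<tau>" using cls_blk_inj[OF K f1 a(1) a(2)] by simp
  qed
  have img: "\<Theta> ` A1 = A2"
  proof
    show "\<Theta> ` A1 \<subseteq> A2" using Th unfolding A1_def A2_def by auto
    show "A2 \<subseteq> \<Theta> ` A1"
    proof
      fix \<tau> assume t: "\<tau> \<in> A2"
      define \<sigma> where "\<sigma> = inv (iota n K f1 (blk K \<tau>))"
      have s: "\<sigma> \<in> cls n K f1" "blk K \<sigma> = blk K \<tau>"
        using iota_props[OF K cls_perm f1, of \<tau>] t unfolding \<sigma>_def A2_def by auto
      then have "\<sigma> \<in> A1" using t unfolding A1_def A2_def by auto
      moreover have "\<Theta> \<sigma> = \<tau>"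
      proof -
        have "\<tau> \<in> cls n K f2" using t unfolding A2_def by simp
        moreover have "\<Theta> \<sigma> \<in> cls n K f2" "blk K (\<Theta> \<sigma>) = blk K \<tau>" using Th[OF s(1)] s(2) by auto
        ultimately show ?thesis using cls_blk_inj[OF K f2] by simp
      qed
      ultimately show "\<tau> \<in> \<Theta> ` A1" by auto
    qed
  qed
  have GT: "G (\<Theta> \<sigma>) = G \<sigma>" if "\<sigma> \<in> A1" for \<sigma>
    using that Th G1 G2 unfolding A1_def by auto
  have "image_mset G (mset_set A2) = image_mset G (image_mset \<Theta> (mset_set A1))"
    using img inj by (simp add: image_mset_mset_set)
  also have "\<dots> = image_mset (G \<circ> \<Theta>) (mset_set A1)" by (simp add: multiset.map_comp)
  also have "\<dots> = image_mset G (mset_set A1)"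
    by (rule image_mset_cong) (use GT finite_cls A1_def in \<open>auto\<close>)
  finally show ?thesis unfolding A1_def A2_def by simp
qed

lemma ides_blk:
  assumes K: "finite K" and s: "\<sigma> \<in> cls n K f"
    and compat: "\<And>i. i \<in> {1..n-1} \<Longrightarrow> blk K \<sigma> i = blk K \<sigma> (Suc i) \<Longrightarrow> f i < f (Suc i)"
  shows "ides n \<sigma> = {i \<in> {1..n-1}. blk K \<sigma> (Suc i) < blk K \<sigma> i}"
proof -
  have sp: "\<sigma> permutes {1..n}" using cls_perm[OF s] .
  have key: "inv \<sigma> (Suc i) < inv \<sigma> i \<longleftrightarrow> blk K \<sigma> (Suc i) < blk K \<sigma> i" if i: "i \<in> {1..n-1}" for i
  proof -
    define p where "p = inv \<sigma> i"
    define q where "q = inv \<sigma> (Suc i)"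
    have i1: "i \<in> {1..n}" "Suc i \<in> {1..n}" using i by auto
    have p: "p \<in> {1..n}" unfolding p_def by (rule perm_inv_in[OF sp i1(1)])
    have p2: "\<sigma> p = i" unfolding p_def by (rule permutes_inverses(1)[OF sp])
    have q: "q \<in> {1..n}" unfolding q_def by (rule perm_inv_in[OF sp i1(2)])
    have q2: "\<sigma> q = Suc i" unfolding q_def by (rule permutes_inverses(1)[OF sp])
    show ?thesis
    proof
      assume "inv \<sigma> (Suc i) < inv \<sigma> i"
      then have qp: "q < p" by (simp add: p_def q_def)
      then have le: "pb K q \<le> pb K p" using pb_mono[OF K] by simp
      have "pb K q \<noteq> pb K p"
      proof
        assume e: "pb K q = pb K p"
        have q1: "1 \<le> q" "p \<le> n" using p q by auto
        have "f (\<sigma> q) < f (\<sigma> p)" by (rule cls_block_lt[OF K s qp q1 e])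
        then have "f (Suc i) < f i" using p2 q2 by simp
        moreover have "blk K \<sigma> i = blk K \<sigma> (Suc i)" using e by (simp add: blk_def p_def q_def)
        then have "f i < f (Suc i)" using compat[OF i] by simp
        ultimately show False by simp
      qed
      then show "blk K \<sigma> (Suc i) < blk K \<sigma> i" using le by (simp add: blk_def p_def q_def)
    next
      assume a: "blk K \<sigma> (Suc i) < blk K \<sigma> i"
      show "inv \<sigma> (Suc i) < inv \<sigma> i"
      proof (rule ccontr)
        assume "\<not> inv \<sigma> (Suc i) < inv \<sigma> i"
        then have "p \<le> q" by (simp add: p_def q_def)
        then have "pb K p \<le> pb K q" using pb_mono[OF K] by simp
        then show False using a by (simp add: blk_def p_def q_def)
      qed
    qed
  qed
  show ?thesis unfolding ides_def
  proof (intro Collect_cong conj_cong refl)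
    fix i assume "i \<in> {1..n-1}"
    then show "(inv \<sigma> (Suc i) < inv \<sigma> i) = (blk K \<sigma> (Suc i) < blk K \<sigma> i)" by (rule key)
  qed
qed

lemma rotv_closed:
  assumes "x \<in> {1..n}" "v \<in> {1..n}"
  shows "rotv n v x = (if v < x then x - v else x + n - v)"
proof (cases "v < x")
  case True
  then have e: "x + n - v - 1 = (x - v - 1) + n" using assms by auto
  have "(x + n - v - 1) mod n = (x - v - 1) mod n" unfolding e by simp
  moreover have "x - v - 1 < n" using assms by auto
  ultimately have "(x + n - v - 1) mod n = x - v - 1" by simp
  then show ?thesis using True unfolding rotv_def by simp
next
  case False
  then have "x + n - v - 1 < n" using assms by auto
  then show ?thesis using False assms by (simp add: rotv_def)
qed

lemma rotv_inj: assumes "v \<in> {1..n}" shows "inj_on (rotv n v) {1..n}"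
proof (rule inj_onI)
  have v: "v \<in> {1..n}" using assms .
  fix x y assume x: "x \<in> {1..n}" and y: "y \<in> {1..n}" and e: "rotv n v x = rotv n v y"
  have ex: "rotv n v x = (if v < x then x - v else x + n - v)" using rotv_closed[OF x v] .
  have ey: "rotv n v y = (if v < y then y - v else y + n - v)" using rotv_closed[OF y v] .
  show "x = y"
  proof (cases "v < x")
    case True
    show ?thesis
    proof (cases "v < y")
      case True
      then show ?thesis using \<open>v < x\<close> ex ey e by simp
    next
      case False
      then have "y + n - v = x - v" using \<open>v < x\<close> ex ey e by simp
      then show ?thesis using x y v False \<open>v < x\<close> by auto
    qed
  next
    case False
    show ?thesis
    proof (cases "v < y")
      case True
      then have "x + n - v = y - v" using False ex ey e by simp
      then show ?thesis using x y v False True by auto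
    next
      case False
      then have "x + n - v = y + n - v" using \<open>\<not> v < x\<close> ex ey e by simp
      then show ?thesis using v False \<open>\<not> v < x\<close> by auto
    qed
  qed
qed

lemma rotv_in: "v \<in> {1..n} \<Longrightarrow> x \<in> {1..n} \<Longrightarrow> rotv n v x \<in> {1..n}"
  by (auto simp: rotv_closed)

lemma rotv_step: "v \<in> {1..n} \<Longrightarrow> i \<in> {1..n-1} \<Longrightarrow> i \<noteq> v \<Longrightarrow> rotv n v i < rotv n v (Suc i)"
  by (auto simp: rotv_closed)

lemma pb_card_iff:
  assumes K: "K \<subseteq> {1..n-1}" "n - 1 \<in> K" and p: "p \<in> {1..n}" and n: "2 \<le> n"
  shows "pb K p = card K \<longleftrightarrow> p = n"
proof -
  have fK: "finite K" using K finite_subset by blast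
  have "pb K p = card K \<longleftrightarrow> {j \<in> K. j < p} = K"
  proof
    assume "pb K p = card K"
    then show "{j \<in> K. j < p} = K" unfolding pb_def using fK by (intro card_subset_eq) auto
  qed (simp add: pb_def)
  also have "\<dots> \<longleftrightarrow> p = n"
  proof
    assume "{j \<in> K. j < p} = K"
    then have "n - 1 < p" using K(2) by blast
    then show "p = n" using p n by simp
  next
    assume pn: "p = n"
    have "j < n" if "j \<in> K" for j
    proof -
      have "j \<le> n - 1" using K(1) that by auto
      then show "j < n" using n by simp
    qed
    then show "{j \<in> K. j < p} = K" using pn by auto
  qed
  finally show ?thesis .
qed

lemma last_blk_iff:
  assumes K: "K \<subseteq> {1..n-1}" "n - 1 \<in> K" and n: "2 \<le> n" and sp: "\<sigma> permutes {1..n}"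
    and v: "v \<in> {1..n}"
  shows "blk K \<sigma> v = card K \<longleftrightarrow> \<sigma> n = v"
proof -
  have "blk K \<sigma> v = card K \<longleftrightarrow> inv \<sigma> v = n"
    unfolding blk_def using pb_card_iff[OF K perm_inv_in[OF sp v] n] .
  also have "\<dots> \<longleftrightarrow> \<sigma> n = v"
  proof
    assume "inv \<sigma> v = n" then show "\<sigma> n = v" using permutes_inverses(1)[OF sp, of v] by simp
  next
    assume "\<sigma> n = v" then show "inv \<sigma> v = n" using permutes_inverses(2)[OF sp, of n] by simp
  qed
  finally show ?thesis .
qed

lemma cls_ldes:
  assumes sp: "\<sigma> permutes {1..n}" and f: "inj_on f {1..n}" and J: "J \<subseteq> {1..n-2}"
  shows "(\<forall>p \<in> {1..n-1} - insert (n-1) J. f (\<sigma> p) < f (\<sigma> (Suc p))) \<longleftrightarrow> ldes n (f \<circ> \<sigma>) \<subseteq> J"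
proof -
  have ne: "f (\<sigma> p) \<noteq> f (\<sigma> (Suc p))" if "p \<in> {1..n-2}" for p
  proof
    assume fe: "f (\<sigma> p) = f (\<sigma> (Suc p))"
    have p1: "p \<in> {1..n}" "Suc p \<in> {1..n}" using that by auto
    have "\<sigma> p = \<sigma> (Suc p)" by (rule inj_onD[OF f fe perm_in[OF sp p1(1)] perm_in[OF sp p1(2)]])
    then have "p = Suc p" by (rule injD[OF permutes_inj[OF sp]])
    then show False by simp
  qed
  show ?thesis
  proof
    assume H: "\<forall>p \<in> {1..n-1} - insert (n-1) J. f (\<sigma> p) < f (\<sigma> (Suc p))"
    show "ldes n (f \<circ> \<sigma>) \<subseteq> J"
    proof
      fix x assume x: "x \<in> ldes n (f \<circ> \<sigma>)"
      then have xl: "x \<in> {1..n-2}" "f (\<sigma> (Suc x)) < f (\<sigma> x)" unfolding ldes_def by simp_all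
      show "x \<in> J"
      proof (rule ccontr)
        assume xJ: "x \<notin> J"
        have xin: "x \<in> {1..n-1} - insert (n-1) J" using xl(1) xJ by auto
        have "f (\<sigma> x) < f (\<sigma> (Suc x))" using H xin by blast
        then show False using xl(2) by simp
      qed
    qed
  next
    assume H: "ldes n (f \<circ> \<sigma>) \<subseteq> J"
    show "\<forall>p \<in> {1..n-1} - insert (n-1) J. f (\<sigma> p) < f (\<sigma> (Suc p))"
    proof
      fix p assume pin: "p \<in> {1..n-1} - insert (n-1) J"
      have p: "p \<in> {1..n-2}" "p \<notin> J" using pin by auto
      show "f (\<sigma> p) < f (\<sigma> (Suc p))"
      proof (rule ccontr)
        assume "\<not> f (\<sigma> p) < f (\<sigma> (Suc p))"
        then have "f (\<sigma> (Suc p)) < f (\<sigma> p)" using ne[OF p(1)] by simp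
        then have "p \<in> ldes n (f \<circ> \<sigma>)" using p(1) unfolding ldes_def by simp
        then show False using H p(2) by blast
      qed
    qed
  qed
qed

definition Lcl :: "nat \<Rightarrow> nat set \<Rightarrow> (nat \<Rightarrow> nat) set" where
  "Lcl n S = {\<sigma> \<in> Pn n. ldes n \<sigma> = S}"
definition Acl :: "nat \<Rightarrow> nat set \<Rightarrow> (nat \<Rightarrow> nat) set" where
  "Acl n S = {\<sigma> \<in> Pn n. ldes n (rotv n (\<sigma> n) \<circ> \<sigma>) = S}"

lemma J_lemma:
  assumes n: "2 \<le> n" and J: "J \<subseteq> {1..n-2}" and v: "v \<in> {1..n}"
  shows "image_mset (ides n) (mset_set {\<sigma> \<in> Pn n. \<sigma> n = v \<and> ldes n \<sigma> \<subseteq> J})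
       = image_mset (ides n) (mset_set {\<sigma> \<in> Pn n. \<sigma> n = v \<and> ldes n (rotv n v \<circ> \<sigma>) \<subseteq> J})"
proof -
  define K where "K = insert (n-1) J"
  have K1: "K \<subseteq> {1..n-1}" using J n unfolding K_def by (auto simp: subset_iff)
  have K2: "n - 1 \<in> K" unfolding K_def by simp
  have fK: "finite K" using K1 finite_subset by blast
  have injid: "inj_on id {1..n}" by simp
  have injr: "inj_on (rotv n v) {1..n}" using rotv_inj[OF v] .
  have e1: "{\<sigma> \<in> Pn n. \<sigma> n = v \<and> ldes n \<sigma> \<subseteq> J} = {\<sigma> \<in> cls n K id. blk K \<sigma> v = card K}"
  proof (intro set_eqI iffI)
    fix \<sigma> assume a: "\<sigma> \<in> {\<sigma> \<in> Pn n. \<sigma> n = v \<and> ldes n \<sigma> \<subseteq> J}"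
    then have sp: "\<sigma> permutes {1..n}" by (simp add: Pn_def)
    have "ldes n (id \<circ> \<sigma>) \<subseteq> J" using a by simp
    then have "\<forall>p \<in> {1..n-1} - K. id (\<sigma> p) < id (\<sigma> (Suc p))"
      unfolding K_def using cls_ldes[OF sp injid J] by blast
    moreover have "blk K \<sigma> v = card K" using last_blk_iff[OF K1 K2 n sp v] a by simp
    ultimately show "\<sigma> \<in> {\<sigma> \<in> cls n K id. blk K \<sigma> v = card K}" using a by (simp add: cls_def)
  next
    fix \<sigma> assume a: "\<sigma> \<in> {\<sigma> \<in> cls n K id. blk K \<sigma> v = card K}"
    then have sp: "\<sigma> permutes {1..n}" by (simp add: cls_def Pn_def)
    have "\<forall>p \<in> {1..n-1} - insert (n-1) J. id (\<sigma> p) < id (\<sigma> (Suc p))"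
      using a unfolding cls_def K_def by simp
    then have "ldes n (id \<circ> \<sigma>) \<subseteq> J" using cls_ldes[OF sp injid J] by blast
    moreover have "\<sigma> n = v" using last_blk_iff[OF K1 K2 n sp v] a by simp
    ultimately show "\<sigma> \<in> {\<sigma> \<in> Pn n. \<sigma> n = v \<and> ldes n \<sigma> \<subseteq> J}" using sp by (simp add: Pn_def)
  qed
  have e2: "{\<sigma> \<in> Pn n. \<sigma> n = v \<and> ldes n (rotv n v \<circ> \<sigma>) \<subseteq> J} = {\<sigma> \<in> cls n K (rotv n v). blk K \<sigma> v = card K}"
  proof (intro set_eqI iffI)
    fix \<sigma> assume a: "\<sigma> \<in> {\<sigma> \<in> Pn n. \<sigma> n = v \<and> ldes n (rotv n v \<circ> \<sigma>) \<subseteq> J}"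
    then have sp: "\<sigma> permutes {1..n}" by (simp add: Pn_def)
    have "ldes n (rotv n v \<circ> \<sigma>) \<subseteq> J" using a by simp
    then have "\<forall>p \<in> {1..n-1} - K. rotv n v (\<sigma> p) < rotv n v (\<sigma> (Suc p))"
      unfolding K_def using cls_ldes[OF sp injr J] by blast
    moreover have "blk K \<sigma> v = card K" using last_blk_iff[OF K1 K2 n sp v] a by simp
    ultimately show "\<sigma> \<in> {\<sigma> \<in> cls n K (rotv n v). blk K \<sigma> v = card K}" using a by (simp add: cls_def)
  next
    fix \<sigma> assume a: "\<sigma> \<in> {\<sigma> \<in> cls n K (rotv n v). blk K \<sigma> v = card K}"
    then have sp: "\<sigma> permutes {1..n}" by (simp add: cls_def Pn_def)
    have "\<forall>p \<in> {1..n-1} - insert (n-1) J. rotv n v (\<sigma> p) < rotv n v (\<sigma> (Suc p))"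
      using a unfolding cls_def K_def by simp
    then have "ldes n (rotv n v \<circ> \<sigma>) \<subseteq> J" using cls_ldes[OF sp injr J] by blast
    moreover have "\<sigma> n = v" using last_blk_iff[OF K1 K2 n sp v] a by simp
    ultimately show "\<sigma> \<in> {\<sigma> \<in> Pn n. \<sigma> n = v \<and> ldes n (rotv n v \<circ> \<sigma>) \<subseteq> J}" using sp by (simp add: Pn_def)
  qed
  define W where "W = (\<lambda>b::nat \<Rightarrow> nat. {i \<in> {1..n-1}. b (Suc i) < b i})"
  have G1: "ides n \<sigma> = W (blk K \<sigma>)" if "\<sigma> \<in> cls n K id" "blk K \<sigma> v = card K" for \<sigma>
    unfolding W_def by (rule ides_blk[OF fK that(1)]) simp
  have G2: "ides n \<sigma> = W (blk K \<sigma>)" if s: "\<sigma> \<in> cls n K (rotv n v)" and bv: "blk K \<sigma> v = card K" for \<sigma>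
    unfolding W_def
  proof (rule ides_blk[OF fK s])
    fix i assume i: "i \<in> {1..n-1}" and eq: "blk K \<sigma> i = blk K \<sigma> (Suc i)"
    have sp: "\<sigma> permutes {1..n}" using cls_perm[OF s] .
    have "i \<noteq> v"
    proof
      assume iv: "i = v"
      have si: "Suc i \<in> {1..n}" using i by auto
      have "\<sigma> n = v" using last_blk_iff[OF K1 K2 n sp v] bv by simp
      moreover have "\<sigma> n = Suc i" using last_blk_iff[OF K1 K2 n sp si] bv eq iv by simp
      ultimately show False using iv by simp
    qed
    then show "rotv n v i < rotv n v (Suc i)" using rotv_step[OF v i] by simp
  qed
  show ?thesis unfolding e1 e2
    by (rule cls_image_mset_eq[OF fK injid injr, where Q = "\<lambda>b. b v = card K" and W = W]) (use G1 G2 in auto)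
qed

lemma image_mset_sum_distrib: "image_mset g (sum F A) = (\<Sum>a\<in>A. image_mset g (F a))"
  by (induction A rule: infinite_finite_induct) auto

lemma mset_set_partition:
  assumes A: "finite A" and Sf: "finite Ss" and D: "\<And>x. x \<in> A \<Longrightarrow> D x \<in> Ss"
  shows "mset_set A = (\<Sum>S\<in>Ss. mset_set {x \<in> A. D x = S})"
proof (rule multiset_eqI)
  fix y
  have "count (\<Sum>S\<in>Ss. mset_set {x \<in> A. D x = S}) y = (\<Sum>S\<in>Ss. count (mset_set {x \<in> A. D x = S}) y)"
    by (rule count_sum)
  also have "\<dots> = (\<Sum>S\<in>Ss. if D y = S \<and> y \<in> A then 1 else 0)"
    by (rule sum.cong) (use A in \<open>auto simp: count_mset_set'\<close>)
  also have "\<dots> = (if y \<in> A then 1 else 0)"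
  proof (cases "y \<in> A")
    case True
    then have "(\<Sum>S\<in>Ss. if D y = S \<and> y \<in> A then 1 else 0) = (\<Sum>S\<in>Ss. if D y = S then 1 else (0::nat))" by simp
    also have "\<dots> = (if D y \<in> Ss then 1 else 0)" by (rule sum.delta'[OF Sf])
    also have "\<dots> = 1" using D[OF True] by simp
    finally show ?thesis using True by simp
  qed simp
  also have "\<dots> = count (mset_set A) y" using A by (simp add: count_mset_set')
  finally show "count (mset_set A) y = count (\<Sum>S\<in>Ss. mset_set {x \<in> A. D x = S}) y" by simp
qed

lemma pow_cancel:
  fixes E1 E2 :: "nat set \<Rightarrow> 'a multiset"
  assumes U: "finite U" and H: "\<And>J. J \<subseteq> U \<Longrightarrow> (\<Sum>S\<in>Pow J. E1 S) = (\<Sum>S\<in>Pow J. E2 S)"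
  shows "S \<subseteq> U \<Longrightarrow> E1 S = E2 S"
proof (induction "card S" arbitrary: S rule: less_induct)
  case less
  have fS: "finite S" using less.prems U finite_subset by blast
  have fP: "finite (Pow S)" using fS by simp
  have r1: "(\<Sum>S'\<in>Pow S. E1 S') = E1 S + (\<Sum>S'\<in>Pow S - {S}. E1 S')"
    by (rule sum.remove[OF fP]) simp
  have r2: "(\<Sum>S'\<in>Pow S. E2 S') = E2 S + (\<Sum>S'\<in>Pow S - {S}. E2 S')"
    by (rule sum.remove[OF fP]) simp
  have "(\<Sum>S'\<in>Pow S - {S}. E1 S') = (\<Sum>S'\<in>Pow S - {S}. E2 S')"
  proof (rule sum.cong[OF refl])
    fix S' assume "S' \<in> Pow S - {S}"
    then have ps: "S' \<subset> S" by auto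
    then have "card S' < card S" using fS by (rule psubset_card_mono[rotated])
    moreover have "S' \<subseteq> U" using ps less.prems by auto
    ultimately show "E1 S' = E2 S'" using less.hyps by blast
  qed
  then show ?case using H[OF less.prems] r1 r2 by simp
qed

lemma per_v_S:
  assumes n: "2 \<le> n" and v: "v \<in> {1..n}" and S: "S \<subseteq> {1..n-2}"
  shows "image_mset (ides n) (mset_set {\<sigma> \<in> Pn n. \<sigma> n = v \<and> ldes n \<sigma> = S})
       = image_mset (ides n) (mset_set {\<sigma> \<in> Pn n. \<sigma> n = v \<and> ldes n (rotv n v \<circ> \<sigma>) = S})"
proof (rule pow_cancel[of "{1..n-2}", OF _ _ S])
  show "finite {1..n-2}" by simp
  fix J :: "nat set" assume J: "J \<subseteq> {1..n-2}"
  have fJ: "finite (Pow J)" using J finite_subset by (simp add: finite_subset)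
  have part: "image_mset (ides n) (mset_set {\<sigma> \<in> Pn n. \<sigma> n = v \<and> D \<sigma> \<subseteq> J})
      = (\<Sum>S\<in>Pow J. image_mset (ides n) (mset_set {\<sigma> \<in> Pn n. \<sigma> n = v \<and> D \<sigma> = S}))" for D
  proof -
    have fA: "finite {\<sigma> \<in> Pn n. \<sigma> n = v \<and> D \<sigma> \<subseteq> J}" using finite_Pn by simp
    have "mset_set {\<sigma> \<in> Pn n. \<sigma> n = v \<and> D \<sigma> \<subseteq> J}
        = (\<Sum>S\<in>Pow J. mset_set {x \<in> {\<sigma> \<in> Pn n. \<sigma> n = v \<and> D \<sigma> \<subseteq> J}. D x = S})"
      by (rule mset_set_partition[OF fA fJ]) auto
    also have "\<dots> = (\<Sum>S\<in>Pow J. mset_set {\<sigma> \<in> Pn n. \<sigma> n = v \<and> D \<sigma> = S})"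
      by (rule sum.cong[OF refl]) (rule arg_cong[where f = mset_set], auto)
    finally show ?thesis by (simp add: image_mset_sum_distrib)
  qed
  show "(\<Sum>S\<in>Pow J. image_mset (ides n) (mset_set {\<sigma> \<in> Pn n. \<sigma> n = v \<and> ldes n \<sigma> = S}))
      = (\<Sum>S\<in>Pow J. image_mset (ides n) (mset_set {\<sigma> \<in> Pn n. \<sigma> n = v \<and> ldes n (rotv n v \<circ> \<sigma>) = S}))"
    using part[of "ldes n"] part[of "\<lambda>\<sigma>. ldes n (rotv n v \<circ> \<sigma>)"] J_lemma[OF n J v] by simp
qed

lemma LA_eq:
  assumes n: "2 \<le> n" and S: "S \<subseteq> {1..n-2}"
  shows "image_mset (ides n) (mset_set (Lcl n S)) = image_mset (ides n) (mset_set (Acl n S))"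
proof -
  have fin: "finite (Lcl n S)" "finite (Acl n S)" using finite_Pn by (auto simp: Lcl_def Acl_def)
  have D: "\<sigma> n \<in> {1..n}" if "\<sigma> \<in> Pn n" for \<sigma>
    using perm_in[of \<sigma> n n] that n by (auto simp: Pn_def)
  have "mset_set (Lcl n S) = (\<Sum>v\<in>{1..n}. mset_set {x \<in> Lcl n S. x n = v})"
    by (rule mset_set_partition[OF fin(1)]) (use D in \<open>auto simp: Lcl_def\<close>)
  also have "\<dots> = (\<Sum>v\<in>{1..n}. mset_set {\<sigma> \<in> Pn n. \<sigma> n = v \<and> ldes n \<sigma> = S})"
    by (rule sum.cong[OF refl]) (rule arg_cong[where f = mset_set], auto simp: Lcl_def)
  finally have l: "image_mset (ides n) (mset_set (Lcl n S))
     = (\<Sum>v\<in>{1..n}. image_mset (ides n) (mset_set {\<sigma> \<in> Pn n. \<sigma> n = v \<and> ldes n \<sigma> = S}))"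
    by (simp add: image_mset_sum_distrib)
  have "mset_set (Acl n S) = (\<Sum>v\<in>{1..n}. mset_set {x \<in> Acl n S. x n = v})"
    by (rule mset_set_partition[OF fin(2)]) (use D in \<open>auto simp: Acl_def\<close>)
  also have "\<dots> = (\<Sum>v\<in>{1..n}. mset_set {\<sigma> \<in> Pn n. \<sigma> n = v \<and> ldes n (rotv n v \<circ> \<sigma>) = S})"
    by (rule sum.cong[OF refl]) (rule arg_cong[where f = mset_set], auto simp: Acl_def)
  finally have a: "image_mset (ides n) (mset_set (Acl n S))
     = (\<Sum>v\<in>{1..n}. image_mset (ides n) (mset_set {\<sigma> \<in> Pn n. \<sigma> n = v \<and> ldes n (rotv n v \<circ> \<sigma>) = S}))"
    by (simp add: image_mset_sum_distrib)
  show ?thesis unfolding l a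
    by (rule sum.cong[OF refl]) (rule per_v_S[OF n _ S], simp)
qed

definition gs :: "nat \<Rightarrow> nat \<Rightarrow> nat" where
  "gs n x = (if x \<in> {1..n} then csucc n x else x)"

lemma csucc_closed: "x \<in> {1..n} \<Longrightarrow> csucc n x = (if x < n then Suc x else 1)"
  by (auto simp: csucc_def)

lemma csucc_in: "x \<in> {1..n} \<Longrightarrow> csucc n x \<in> {1..n}"
  by (auto simp: csucc_closed)

lemma csucc_ne: "2 \<le> n \<Longrightarrow> x \<in> {1..n} \<Longrightarrow> csucc n x \<noteq> x"
  by (auto simp: csucc_closed)

lemma csucc_inj: "inj_on (csucc n) {1..n}"
proof (rule inj_onI)
  fix x y assume x: "x \<in> {1..n}" and y: "y \<in> {1..n}" and e: "csucc n x = csucc n y"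
  show "x = y"
  proof (cases "x < n")
    case True
    show ?thesis
    proof (cases "y < n")
      case True then show ?thesis using \<open>x < n\<close> e x y by (simp add: csucc_closed)
    next
      case False then show ?thesis using \<open>x < n\<close> e x y by (simp add: csucc_closed)
    qed
  next
    case False
    show ?thesis
    proof (cases "y < n")
      case True then show ?thesis using \<open>\<not> x < n\<close> e x y by (simp add: csucc_closed)
    next
      case False then show ?thesis using \<open>\<not> x < n\<close> x y by simp
    qed
  qed
qed

lemma gs_permutes: "gs n permutes {1..n}"
proof (rule bij_imp_permutes)
  have eq: "gs n x = csucc n x" if "x \<in> {1..n}" for x using that by (simp add: gs_def)
  have inj: "inj_on (gs n) {1..n}" using inj_on_cong[of "{1..n}" "gs n" "csucc n"] eq csucc_inj by simp
  have sub: "gs n ` {1..n} \<subseteq> {1..n}"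
  proof (rule image_subsetI)
    fix x assume "x \<in> {1..n}" then show "gs n x \<in> {1..n}" using eq csucc_in by simp
  qed
  have "gs n ` {1..n} = {1..n}"
    by (rule endo_inj_surj[OF _ sub inj]) simp
  then show "bij_betw (gs n) {1..n} {1..n}" using inj by (simp add: bij_betw_def)
  show "gs n x = x" if "x \<notin> {1..n}" for x unfolding gs_def using that by (rule if_not_P)
qed

lemma cDes_cong:
  assumes "\<And>x. x \<in> {1..n} \<Longrightarrow> \<tau> x = \<tau>' x"
  shows "perm_cDes n \<tau> = perm_cDes n \<tau>'"
  unfolding perm_cDes_def using assms csucc_in by auto

lemma ldes_cong:
  assumes "\<And>x. x \<in> {1..n} \<Longrightarrow> \<tau> x = \<tau>' x"
  shows "ldes n \<tau> = ldes n \<tau>'"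
  unfolding ldes_def using assms by auto

lemma card_cDes_gs:
  assumes n: "2 \<le> n" and sp: "\<sigma> permutes {1..n}"
  shows "card (perm_cDes n (gs n \<circ> \<sigma>)) = card (perm_cDes n \<sigma>)"
proof -
  define A where "A = perm_cDes n \<sigma>"
  define B where "B = perm_cDes n (gs n \<circ> \<sigma>)"
  define q where "q = inv \<sigma> n"
  have n1: "n \<in> {1..n}" using n by simp
  have q: "q \<in> {1..n}" "\<sigma> q = n" using perm_inv_in[OF sp n1] permutes_inverses(1)[OF sp] q_def by auto
  define q' where "q' = (if q = 1 then n else q - 1)"
  have q': "q' \<in> {1..n}" "csucc n q' = q"
  proof -
    show "q' \<in> {1..n}" using q(1) n unfolding q'_def by auto
    then have cl: "csucc n q' = (if q' < n then Suc q' else 1)" by (rule csucc_closed)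
    show "csucc n q' = q"
    proof (cases "q = 1")
      case True then show ?thesis using cl n unfolding q'_def by simp
    next
      case False
      then have "q' = q - 1" "q - 1 < n" using q(1) unfolding q'_def by auto
      then show ?thesis using cl False q(1) by simp
    qed
  qed
  have cq: "csucc n p = q \<longleftrightarrow> p = q'" if p: "p \<in> {1..n}" for p
    using inj_onD[OF csucc_inj _ p q'(1)] q'(2) by auto
  have sq: "\<sigma> p = n \<longleftrightarrow> p = q" if p: "p \<in> {1..n}" for p
    using q(2) injD[OF permutes_inj[OF sp]] by auto
  have cmp: "p \<in> B \<longleftrightarrow> (p \<in> A \<and> p \<noteq> q) \<or> p = q'" if p: "p \<in> {1..n}" for p
  proof -
    define a where "a = \<sigma> p"
    define b where "b = \<sigma> (csucc n p)"
    have cp: "csucc n p \<in> {1..n}" using csucc_in[OF p] .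
    have ab: "a \<in> {1..n}" "b \<in> {1..n}" using perm_in[OF sp p] perm_in[OF sp cp] a_def b_def by auto
    have anb: "a \<noteq> b" using csucc_ne[OF n p] injD[OF permutes_inj[OF sp]] a_def b_def by metis
    have gs_a: "gs n a = csucc n a" "gs n b = csucc n b" using ab by (auto simp: gs_def)
    have inB: "p \<in> B \<longleftrightarrow> csucc n b < csucc n a"
      using p gs_a unfolding B_def perm_cDes_def a_def b_def by auto
    have inA: "p \<in> A \<longleftrightarrow> b < a" using p unfolding A_def perm_cDes_def a_def b_def by auto
    have aq: "a = n \<longleftrightarrow> p = q" using sq[OF p] a_def by simp
    have bq: "b = n \<longleftrightarrow> p = q'" using sq[OF cp] cq[OF p] b_def by simp
    show ?thesis
    proof (cases "a = n")
      case True
      then have "b < n" using ab anb by auto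
      then have "\<not> csucc n b < csucc n a" using True ab by (auto simp: csucc_closed)
      moreover have "p \<noteq> q'" using bq \<open>b < n\<close> by auto
      ultimately show ?thesis using inB aq True by auto
    next
      case False
      then have an: "a < n" using ab by auto
      show ?thesis
      proof (cases "b = n")
        case True
        then have "csucc n b < csucc n a" using an ab by (auto simp: csucc_closed)
        then show ?thesis using inB bq True by auto
      next
        case False
        then have bn: "b < n" using ab by auto
        have "csucc n b < csucc n a \<longleftrightarrow> b < a" using an bn ab by (auto simp: csucc_closed)
        then show ?thesis using inB inA aq bq False \<open>a \<noteq> n\<close> by auto
      qed
    qed
  qed
  have Bsub: "B \<subseteq> {1..n}" unfolding B_def perm_cDes_def by auto
  have Asub: "A \<subseteq> {1..n}" unfolding A_def perm_cDes_def by auto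
  have BA: "B = insert q' (A - {q})"
  proof (intro set_eqI iffI)
    fix p assume "p \<in> B" then show "p \<in> insert q' (A - {q})" using cmp Bsub by blast
  next
    fix p assume "p \<in> insert q' (A - {q})"
    then have "p \<in> {1..n}" using Asub q'(1) by auto
    then show "p \<in> B" using cmp \<open>p \<in> insert q' (A - {q})\<close> by blast
  qed
  have qA: "q \<in> A"
  proof -
    have cq1: "csucc n q \<in> {1..n}" using csucc_in[OF q(1)] .
    have "\<sigma> (csucc n q) \<noteq> n" using sq[OF cq1] csucc_ne[OF n q(1)] by simp
    moreover have "\<sigma> (csucc n q) \<le> n" using perm_in[OF sp cq1] by simp
    ultimately show ?thesis using q unfolding A_def perm_cDes_def by simp
  qed
  have "q' \<notin> A"
  proof -
    have "\<sigma> q' \<le> n" using perm_in[OF sp q'(1)] by simp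
    then show ?thesis using q'(2) q(2) unfolding A_def perm_cDes_def by simp
  qed
  have fA: "finite A" using Asub finite_subset by blast
  have "card B = card (A - {q}) + 1" using BA \<open>q' \<notin> A\<close> fA by simp
  also have "\<dots> = card A" using card_Suc_Diff1[OF fA qA] by simp
  finally show ?thesis unfolding A_def B_def .
qed

lemma gs_pow: "x \<in> {1..n} \<Longrightarrow> (gs n ^^ j) x = ((x - 1 + j) mod n) + 1"
proof (induction j)
  case 0
  then have "x - 1 < n" by auto
  then show ?case using 0 by simp
next
  case (Suc j)
  have "0 < n" using Suc.prems by auto
  then have m: "(x - 1 + j) mod n < n" by (rule mod_less_divisor)
  then have y: "((x - 1 + j) mod n) + 1 \<in> {1..n}" by (simp only: atLeastAtMost_iff) linarith
  have "(gs n ^^ Suc j) x = gs n (((x - 1 + j) mod n) + 1)" using Suc by simp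
  also have "\<dots> = csucc n (((x - 1 + j) mod n) + 1)" using y by (simp add: gs_def)
  also have "\<dots> = (Suc ((x - 1 + j) mod n)) mod n + 1" by (simp add: csucc_def)
  also have "\<dots> = (Suc (x - 1 + j)) mod n + 1" by (simp add: mod_Suc_eq)
  finally show ?case by simp
qed

lemma gs_pow_permutes: "(gs n ^^ j) permutes {1..n}"
proof (induction j)
  case 0 then show ?case using permutes_id[of "{1..n}"] by (simp add: id_def)
next
  case (Suc j) then show ?case using permutes_compose[OF Suc gs_permutes] by (simp only: funpow.simps(2))
qed

lemma rotv_eq_pow:
  assumes v: "v \<in> {1..n}" and x: "x \<in> {1..n}"
  shows "rotv n v x = (gs n ^^ (n - v)) x"
proof -
  have "x - 1 + (n - v) = x + n - v - 1" using v x by auto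
  then show ?thesis using gs_pow[OF x, of "n - v"] by (simp add: rotv_def)
qed

lemma card_cDes_pow:
  assumes n: "2 \<le> n" and sp: "\<sigma> permutes {1..n}"
  shows "card (perm_cDes n ((gs n ^^ j) \<circ> \<sigma>)) = card (perm_cDes n \<sigma>)"
proof (induction j)
  case 0 then show ?case by simp
next
  case (Suc j)
  have p: "(gs n ^^ j) \<circ> \<sigma> permutes {1..n}" using permutes_compose[OF sp gs_pow_permutes] .
  have eq: "(gs n ^^ Suc j) \<circ> \<sigma> = gs n \<circ> ((gs n ^^ j) \<circ> \<sigma>)" by (simp only: funpow.simps(2) comp_assoc)
  show ?case unfolding eq card_cDes_gs[OF n p] using Suc.IH .
qed

lemma card_cDes_ldes:
  assumes n: "2 \<le> n" and sp: "\<sigma> permutes {1..n}"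
  shows "card (perm_cDes n \<sigma>) = Suc (card (ldes n (rotv n (\<sigma> n) \<circ> \<sigma>)))"
proof -
  define v where "v = \<sigma> n"
  have n1: "n \<in> {1..n}" using n by simp
  have v: "v \<in> {1..n}" using perm_in[OF sp n1] v_def by simp
  define \<tau> where "\<tau> = (gs n ^^ (n - v)) \<circ> \<sigma>"
  have tp: "\<tau> permutes {1..n}" unfolding \<tau>_def using permutes_compose[OF sp gs_pow_permutes] .
  have agree: "\<tau> x = (rotv n v \<circ> \<sigma>) x" if "x \<in> {1..n}" for x
    using rotv_eq_pow[OF v perm_in[OF sp that]] by (simp add: \<tau>_def)
  have tn: "\<tau> n = n" using agree[OF n1] rotv_closed[OF v v] v_def by simp
  have tin: "\<tau> x \<in> {1..n}" if "x \<in> {1..n}" for x using perm_in[OF tp that] .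
  have tinj: "\<tau> x = \<tau> y \<Longrightarrow> x = y" for x y using injD[OF permutes_inj[OF tp]] .
  have eq: "perm_cDes n \<tau> = insert n (ldes n \<tau>)"
  proof (intro set_eqI iffI)
    fix i assume i: "i \<in> perm_cDes n \<tau>"
    then have i1: "i \<in> {1..n}" "\<tau> (csucc n i) < \<tau> i" unfolding perm_cDes_def by auto
    show "i \<in> insert n (ldes n \<tau>)"
    proof (cases "i = n")
      case True then show ?thesis by simp
    next
      case False
      then have cs: "csucc n i = Suc i" using i1(1) by (simp add: csucc_closed)
      have "i \<noteq> n - 1"
      proof
        assume "i = n - 1"
        then have "Suc i = n" using n by simp
        then have "n < \<tau> i" using i1(2) cs tn by simp
        then show False using tin[OF i1(1)] by simp
      qed
      then have "i \<in> {1..n-2}" using i1(1) False by auto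
      then show ?thesis using i1(2) cs unfolding ldes_def by simp
    qed
  next
    fix i assume i: "i \<in> insert n (ldes n \<tau>)"
    show "i \<in> perm_cDes n \<tau>"
    proof (cases "i = n")
      case True
      have c1: "csucc n n = 1" by (simp add: csucc_def)
      have one: "(1::nat) \<in> {1..n}" using n by simp
      have "\<tau> 1 \<noteq> n" using tinj[of 1 n] tn n by auto
      then have "\<tau> 1 < n" using tin[OF one] by simp
      then show ?thesis using True c1 tn n1 unfolding perm_cDes_def by simp
    next
      case False
      then have i1: "i \<in> {1..n-2}" "\<tau> (Suc i) < \<tau> i" using i unfolding ldes_def by auto
      then have "i \<in> {1..n}" "i < n" by auto
      then have "csucc n i = Suc i" using csucc_closed by simp
      then show ?thesis using i1 unfolding perm_cDes_def by auto
    qed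
  qed
  have "n \<notin> ldes n \<tau>" unfolding ldes_def using n by auto
  moreover have "finite (ldes n \<tau>)" unfolding ldes_def by simp
  ultimately have "card (perm_cDes n \<tau>) = Suc (card (ldes n \<tau>))" using eq by simp
  moreover have "ldes n \<tau> = ldes n (rotv n v \<circ> \<sigma>)" by (rule ldes_cong) (rule agree)
  moreover have "card (perm_cDes n \<tau>) = card (perm_cDes n \<sigma>)" unfolding \<tau>_def by (rule card_cDes_pow[OF n sp])
  ultimately show ?thesis using v_def by simp
qed

lemma rotv_gs:
  assumes v: "v \<in> {1..n}" and x: "x \<in> {1..n}"
  shows "rotv n (gs n v) (gs n x) = rotv n v x"
proof -
  have gv: "gs n v = (if v < n then Suc v else 1)" using v by (simp add: gs_def csucc_closed)
  have gx: "gs n x = (if x < n then Suc x else 1)" using x by (simp add: gs_def csucc_closed)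
  have gvi: "gs n v \<in> {1..n}" using v csucc_in[OF v] by (simp add: gs_def)
  have gxi: "gs n x \<in> {1..n}" using x csucc_in[OF x] by (simp add: gs_def)
  have r1: "rotv n (gs n v) (gs n x) = (if gs n v < gs n x then gs n x - gs n v else gs n x + n - gs n v)"
    by (rule rotv_closed[OF gxi gvi])
  have r2: "rotv n v x = (if v < x then x - v else x + n - v)" by (rule rotv_closed[OF x v])
  show ?thesis
  proof (cases "x < n")
    case True
    show ?thesis
    proof (cases "v < n")
      case True then show ?thesis using \<open>x < n\<close> r1 r2 gv gx by simp
    next
      case False then have "v = n" using v by simp
      then show ?thesis using \<open>x < n\<close> r1 r2 gv gx x by auto
    qed
  next
    case False then have xn: "x = n" using x by simp
    show ?thesis
    proof (cases "v < n")
      case True then show ?thesis using xn r1 r2 gv gx v by auto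
    next
      case False then have "v = n" using v by simp
      then show ?thesis using xn r1 r2 gv gx by simp
    qed
  qed
qed

lemma Acl_gs:
  assumes n: "2 \<le> n" and s: "\<sigma> \<in> Acl n S"
  shows "gs n \<circ> \<sigma> \<in> Acl n S"
proof -
  have sp: "\<sigma> permutes {1..n}" using s by (simp add: Acl_def Pn_def)
  have n1: "n \<in> {1..n}" using n by simp
  have p: "gs n \<circ> \<sigma> permutes {1..n}" using permutes_compose[OF sp gs_permutes] .
  have "ldes n (rotv n ((gs n \<circ> \<sigma>) n) \<circ> (gs n \<circ> \<sigma>)) = ldes n (rotv n (\<sigma> n) \<circ> \<sigma>)"
  proof (rule ldes_cong)
    fix x assume x: "x \<in> {1..n}"
    show "(rotv n ((gs n \<circ> \<sigma>) n) \<circ> (gs n \<circ> \<sigma>)) x = (rotv n (\<sigma> n) \<circ> \<sigma>) x"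
      using rotv_gs[OF perm_in[OF sp n1] perm_in[OF sp x]] by simp
  qed
  then show ?thesis using s p by (simp add: Acl_def Pn_def)
qed

lemma cDes_inv_gs:
  assumes n: "2 \<le> n" and sp: "\<sigma> permutes {1..n}"
  shows "perm_cDes n (inv (gs n \<circ> \<sigma>)) = cshift n (perm_cDes n (inv \<sigma>))"
proof -
  have gp: "gs n permutes {1..n}" by (rule gs_permutes)
  have "inv (gs n \<circ> \<sigma>) = inv \<sigma> \<circ> inv (gs n)"
    by (rule o_inv_distrib[OF permutes_bij[OF gp] permutes_bij[OF sp]])
  moreover
  define \<pi> where "\<pi> = inv \<sigma>"
  define ig where "ig = inv (gs n)"
  have igc: "ig (csucc n j) = j" if "j \<in> {1..n}" for j
  proof -
    have "gs n j = csucc n j" using that by (simp add: gs_def)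
    then show ?thesis using permutes_inverses(2)[OF gp, of j] by (simp add: ig_def)
  qed
  have igi: "ig i \<in> {1..n}" if "i \<in> {1..n}" for i using perm_inv_in[OF gp that] by (simp add: ig_def)
  have cig: "csucc n (ig i) = i" if "i \<in> {1..n}" for i
  proof -
    have "gs n (ig i) = i" using permutes_inverses(1)[OF gp] by (simp add: ig_def)
    then show ?thesis using igi[OF that] by (simp add: gs_def)
  qed
  have "perm_cDes n (\<pi> \<circ> ig) = cshift n (perm_cDes n \<pi>)"
  proof (intro set_eqI iffI)
    fix i assume i: "i \<in> perm_cDes n (\<pi> \<circ> ig)"
    then have i1: "i \<in> {1..n}" "\<pi> (ig (csucc n i)) < \<pi> (ig i)" unfolding perm_cDes_def by auto
    define j where "j = ig i"
    have j: "j \<in> {1..n}" "csucc n j = i" using igi[OF i1(1)] cig[OF i1(1)] j_def by auto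
    have "ig (csucc n i) = csucc n j" using igc[OF csucc_in[OF j(1)]] j(2) by simp
    then have "j \<in> perm_cDes n \<pi>" using i1(2) j unfolding perm_cDes_def j_def by simp
    then show "i \<in> cshift n (perm_cDes n \<pi>)" using j(2) unfolding cshift_def by blast
  next
    fix i assume "i \<in> cshift n (perm_cDes n \<pi>)"
    then obtain j where j: "j \<in> perm_cDes n \<pi>" "i = csucc n j" unfolding cshift_def by blast
    then have j1: "j \<in> {1..n}" "\<pi> (csucc n j) < \<pi> j" unfolding perm_cDes_def by auto
    have i1: "i \<in> {1..n}" using csucc_in[OF j1(1)] j(2) by simp
    have "ig i = j" using igc[OF j1(1)] j(2) by simp
    moreover have "ig (csucc n i) = csucc n j" using igc[OF csucc_in[OF j1(1)]] j(2) by simp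
    ultimately show "i \<in> perm_cDes n (\<pi> \<circ> ig)" using i1 j1(2) unfolding perm_cDes_def by simp
  qed
  ultimately show ?thesis by (simp add: \<pi>_def ig_def)
qed

lemma Acl_shift:
  assumes n: "2 \<le> n"
  shows "image_mset (cshift n \<circ> (\<lambda>\<sigma>. perm_cDes n (inv \<sigma>))) (mset_set (Acl n S))
       = image_mset (\<lambda>\<sigma>. perm_cDes n (inv \<sigma>)) (mset_set (Acl n S))"
proof -
  define \<Gamma> where "\<Gamma> = (\<lambda>\<sigma>::nat \<Rightarrow> nat. gs n \<circ> \<sigma>)"
  have fin: "finite (Acl n S)" using finite_Pn by (simp add: Acl_def)
  have inj: "inj_on \<Gamma> (Acl n S)"
  proof (rule inj_onI)
    fix \<sigma> \<tau> assume "\<Gamma> \<sigma> = \<Gamma> \<tau>"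
    then have "gs n (\<sigma> x) = gs n (\<tau> x)" for x unfolding \<Gamma>_def by (metis comp_apply)
    then show "\<sigma> = \<tau>" using injD[OF permutes_inj[OF gs_permutes]] by blast
  qed
  have img: "\<Gamma> ` Acl n S = Acl n S"
    by (rule endo_inj_surj[OF fin _ inj]) (use Acl_gs[OF n] in \<open>auto simp: \<Gamma>_def\<close>)
  have "image_mset (cshift n \<circ> (\<lambda>\<sigma>. perm_cDes n (inv \<sigma>))) (mset_set (Acl n S))
      = image_mset ((\<lambda>\<sigma>. perm_cDes n (inv \<sigma>)) \<circ> \<Gamma>) (mset_set (Acl n S))"
  proof (rule image_mset_cong)
    fix \<sigma> assume "\<sigma> \<in># mset_set (Acl n S)"
    then have "\<sigma> permutes {1..n}" using fin by (simp add: Acl_def Pn_def)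
    then show "(cshift n \<circ> (\<lambda>\<sigma>. perm_cDes n (inv \<sigma>))) \<sigma> = ((\<lambda>\<sigma>. perm_cDes n (inv \<sigma>)) \<circ> \<Gamma>) \<sigma>"
      using cDes_inv_gs[OF n] by (simp add: \<Gamma>_def)
  qed
  also have "\<dots> = image_mset (\<lambda>\<sigma>. perm_cDes n (inv \<sigma>)) (image_mset \<Gamma> (mset_set (Acl n S)))"
    by (simp only: multiset.map_comp)
  also have "image_mset \<Gamma> (mset_set (Acl n S)) = mset_set (Acl n S)"
    using image_mset_mset_set[OF inj] img by simp
  finally show ?thesis .
qed

lemma cDes_good:
  assumes n: "2 \<le> n" and sp: "\<sigma> permutes {1..n}"
  shows "perm_cDes n (inv \<sigma>) \<subseteq> {1..n} \<and> perm_cDes n (inv \<sigma>) \<noteq> {} \<and> perm_cDes n (inv \<sigma>) \<noteq> {1..n}"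
proof (intro conjI)
  define \<pi> where "\<pi> = inv \<sigma>"
  have pp: "\<pi> permutes {1..n}" using permutes_inv[OF sp] by (simp add: \<pi>_def)
  show "perm_cDes n (inv \<sigma>) \<subseteq> {1..n}" unfolding perm_cDes_def by auto
  have n1: "n \<in> {1..n}" and o1: "(1::nat) \<in> {1..n}" using n by auto
  define j where "j = \<sigma> n"
  have j: "j \<in> {1..n}" "\<pi> j = n" using perm_in[OF sp n1] permutes_inverses(2)[OF sp] by (auto simp: j_def \<pi>_def)
  have cj: "csucc n j \<in> {1..n}" using csucc_in[OF j(1)] .
  have "\<pi> (csucc n j) \<noteq> n" using injD[OF permutes_inj[OF pp], of "csucc n j" j] j(2) csucc_ne[OF n j(1)] by auto
  then have "\<pi> (csucc n j) < \<pi> j" using perm_in[OF pp cj] j(2) by simp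
  then have "j \<in> perm_cDes n (inv \<sigma>)" using j(1) unfolding perm_cDes_def \<pi>_def by simp
  then show "perm_cDes n (inv \<sigma>) \<noteq> {}" by auto
  define j1 where "j1 = \<sigma> 1"
  have j1: "j1 \<in> {1..n}" "\<pi> j1 = 1" using perm_in[OF sp o1] permutes_inverses(2)[OF sp] by (auto simp: j1_def \<pi>_def)
  have "\<pi> (csucc n j1) \<in> {1..n}" using perm_in[OF pp csucc_in[OF j1(1)]] .
  then have "j1 \<notin> perm_cDes n (inv \<sigma>)" using j1 unfolding perm_cDes_def \<pi>_def by auto
  then show "perm_cDes n (inv \<sigma>) \<noteq> {1..n}" using j1(1) by blast
qed

lemma cDes_restr: "perm_cDes n (inv \<sigma>) \<inter> {1..n-1} = ides n \<sigma>"
proof -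
  have "csucc n i = Suc i" if "i \<in> {1..n-1}" for i using that by (auto simp: csucc_def)
  then show ?thesis unfolding perm_cDes_def ides_def by auto
qed

lemma M_decomp:
  assumes n: "2 \<le> n" and k: "1 \<le> k"
  shows "image_mset (perm_cDes n) (mset_set (C_set n k))
       = (\<Sum>S\<in>{S. S \<subseteq> {1..n-2} \<and> card S = k - 1}. image_mset (\<lambda>\<sigma>. perm_cDes n (inv \<sigma>)) (mset_set (Acl n S)))"
proof -
  define C where "C = {\<sigma> \<in> Pn n. card (perm_cDes n \<sigma>) = k}"
  have finC: "finite C" using finite_Pn by (simp add: C_def)
  have injC: "inj_on inv C"
  proof (rule inj_onI)
    fix \<sigma> \<tau> assume "\<sigma> \<in> C" "\<tau> \<in> C" "inv \<sigma> = inv \<tau>"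
    then show "\<sigma> = \<tau>" using permutes_inv_inv unfolding C_def Pn_def by (metis (no_types, lifting) mem_Collect_eq)
  qed
  have CC: "C_set n k = inv ` C"
  proof (intro set_eqI iffI)
    fix \<pi> assume "\<pi> \<in> C_set n k"
    then have p: "\<pi> permutes {1..n}" "card (perm_cDes n (inv \<pi>)) = k" by (auto simp: C_set_def)
    then have "inv \<pi> \<in> C" using permutes_inv[OF p(1)] by (simp add: C_def Pn_def)
    moreover have "\<pi> = inv (inv \<pi>)" using permutes_inv_inv[OF p(1)] by simp
    ultimately show "\<pi> \<in> inv ` C" by blast
  next
    fix \<pi> assume "\<pi> \<in> inv ` C"
    then obtain \<sigma> where s: "\<sigma> \<in> C" "\<pi> = inv \<sigma>" by blast
    then have sp: "\<sigma> permutes {1..n}" "card (perm_cDes n \<sigma>) = k" by (auto simp: C_def Pn_def)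
    then show "\<pi> \<in> C_set n k" using s(2) permutes_inv[OF sp(1)] permutes_inv_inv[OF sp(1)] by (simp add: C_set_def)
  qed
  have M1: "image_mset (perm_cDes n) (mset_set (C_set n k)) = image_mset (\<lambda>\<sigma>. perm_cDes n (inv \<sigma>)) (mset_set C)"
    unfolding CC image_mset_mset_set[OF injC, symmetric] by (simp add: multiset.map_comp comp_def)
  define Ss where "Ss = {S. S \<subseteq> {1..n-2} \<and> card S = k - 1}"
  have finSs: "finite Ss" unfolding Ss_def by (rule finite_subset[of _ "Pow {1..n-2}"]) auto
  define D where "D = (\<lambda>\<sigma>::nat \<Rightarrow> nat. ldes n (rotv n (\<sigma> n) \<circ> \<sigma>))"
  have DS: "D \<sigma> \<in> Ss" if "\<sigma> \<in> C" for \<sigma>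
  proof -
    have sp: "\<sigma> permutes {1..n}" "card (perm_cDes n \<sigma>) = k" using that by (auto simp: C_def Pn_def)
    have "card (D \<sigma>) = k - 1" using card_cDes_ldes[OF n sp(1)] sp(2) by (simp add: D_def)
    moreover have "D \<sigma> \<subseteq> {1..n-2}" unfolding D_def ldes_def by auto
    ultimately show ?thesis by (simp add: Ss_def)
  qed
  have part: "mset_set C = (\<Sum>S\<in>Ss. mset_set {x \<in> C. D x = S})"
    by (rule mset_set_partition[OF finC finSs DS])
  have eqA: "{x \<in> C. D x = S} = Acl n S" if "S \<in> Ss" for S
  proof (intro set_eqI iffI)
    fix \<sigma> assume "\<sigma> \<in> {x \<in> C. D x = S}"
    then show "\<sigma> \<in> Acl n S" by (simp add: C_def D_def Acl_def)
  next
    fix \<sigma> assume a: "\<sigma> \<in> Acl n S"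
    then have sp: "\<sigma> permutes {1..n}" and dS: "D \<sigma> = S" by (auto simp: Acl_def Pn_def D_def)
    have "card (perm_cDes n \<sigma>) = Suc (card S)" using card_cDes_ldes[OF n sp] dS by (simp add: D_def)
    also have "\<dots> = k" using that k by (simp add: Ss_def)
    finally show "\<sigma> \<in> {x \<in> C. D x = S}" using sp dS by (simp add: C_def Pn_def)
  qed
  have "image_mset (\<lambda>\<sigma>. perm_cDes n (inv \<sigma>)) (mset_set C)
     = (\<Sum>S\<in>Ss. image_mset (\<lambda>\<sigma>. perm_cDes n (inv \<sigma>)) (mset_set {x \<in> C. D x = S}))"
    unfolding part by (rule image_mset_sum_distrib)
  also have "\<dots> = (\<Sum>S\<in>Ss. image_mset (\<lambda>\<sigma>. perm_cDes n (inv \<sigma>)) (mset_set (Acl n S)))"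
    by (rule sum.cong[OF refl]) (simp add: eqA)
  finally show ?thesis using M1 by (simp add: Ss_def)
qed

lemma ivt_nat:
  fixes f :: "nat \<Rightarrow> nat"
  assumes "f a \<le> t" "t \<le> f b" "a \<le> b" "\<And>q. a \<le> q \<Longrightarrow> q < b \<Longrightarrow> f (Suc q) \<le> Suc (f q)"
  shows "\<exists>p. a \<le> p \<and> p \<le> b \<and> f p = t"
  using assms
proof (induction b)
  case 0 then show ?case by auto
next
  case (Suc b)
  show ?case
  proof (cases "t \<le> f b \<and> a \<le> b")
    case True
    then obtain p where "a \<le> p" "p \<le> b" "f p = t" using Suc by auto
    then show ?thesis by (intro exI[of _ p]) auto
  next
    case False
    then have "f b < t \<or> b < a" by auto
    then show ?thesis
    proof
      assume fb: "f b < t"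
      show ?thesis
      proof (cases "a \<le> b")
        case True
        then have "f (Suc b) \<le> Suc (f b)" using Suc.prems(4) by auto
        then have "f (Suc b) = t" using fb Suc.prems(2) by simp
        then show ?thesis using Suc.prems(3) by (intro exI[of _ "Suc b"]) auto
      next
        case False
        then have "a = Suc b" using Suc.prems(3) by simp
        then show ?thesis using Suc.prems(1,2) by (intro exI[of _ "Suc b"]) auto
      qed
    next
      assume "b < a"
      then have "a = Suc b" using Suc.prems(3) by simp
      then show ?thesis using Suc.prems(1,2) by (intro exI[of _ "Suc b"]) auto
    qed
  qed
qed

lemma sorted_wrt_ge_map:
  fixes f :: "nat \<Rightarrow> nat"
  assumes "\<And>r. Suc r < m \<Longrightarrow> f (Suc r) \<le> f r"
  shows "sorted_wrt (\<ge>) (map f [0..<m])"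
proof -
  have "f j \<le> f i" if "i < j" "j < m" for i j
    using that
  proof (induction j)
    case 0 then show ?case by simp
  next
    case (Suc j)
    show ?case
    proof (cases "i = j")
      case True then show ?thesis using assms Suc.prems by simp
    next
      case False
      then have "f j \<le> f i" using Suc by simp
      moreover have "f (Suc j) \<le> f j" using assms Suc.prems by simp
      ultimately show ?thesis by simp
    qed
  qed
  then show ?thesis by (simp add: sorted_wrt_iff_nth_less)
qed

lemma chain_gt:
  fixes g :: "nat \<Rightarrow> nat"
  assumes "\<And>r. p \<le> r \<Longrightarrow> r < q \<Longrightarrow> g (Suc r) < g r" "p < q"
  shows "g q < g p"
  using assms
proof (induction q)
  case 0 then show ?case by simp
next
  case (Suc q)
  show ?case
  proof (cases "p = q")
    case True then show ?thesis using Suc.prems by auto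
  next
    case False
    then have "g q < g p" using Suc by auto
    moreover have "g (Suc q) < g q" using Suc.prems False by auto
    ultimately show ?thesis by simp
  qed
qed

locale rib =
  fixes n :: nat and S :: "nat set"
  assumes n2: "2 \<le> n" and Ssub: "S \<subseteq> {1..n-2}"
begin

definition h where "h = card S"
definition A where "A t = bst (n-1) S t"
definition cc :: "nat \<Rightarrow> nat \<times> nat" where
  "cc p = (if p = n then (0, n - h) else (h + 1 - pb S p, p - pb S p))"
definition LA where
  "LA r = (if r = 0 then n - h + 1 else A (h + 2 - r) - (h + 1 - r) + 1)"
definition MU where
  "MU r = (if r = 0 then n - h else A (h + 1 - r) - (h + 1 - r) + 1)"
definition lam where "lam = map LA [0..<h+2]"
definition mu where "mu = map MU [0..<h+2]"

lemma fS: "finite S" using Ssub finite_subset by blast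

lemma h_le: "h \<le> n - 2"
  unfolding h_def using card_mono[OF _ Ssub] by simp

lemma u_le_pm1: "pb S p \<le> p - 1"
proof -
  have "{j \<in> S. j < p} \<subseteq> {1..<p}" using Ssub by auto
  then show ?thesis unfolding pb_def using card_mono[of "{1..<p}"] by fastforce
qed

lemma u_le_h: "pb S p \<le> h"
  unfolding pb_def h_def by (rule card_mono[OF fS]) auto

lemma u_top: "n - 1 \<le> p \<Longrightarrow> pb S p = h"
proof -
  assume p: "n - 1 \<le> p"
  have "{j \<in> S. j < p} = S"
  proof (intro set_eqI iffI)
    fix j assume "j \<in> S"
    then have "j \<le> n - 2" using Ssub by auto
    then show "j \<in> {j \<in> S. j < p}" using \<open>j \<in> S\<close> p n2 by auto
  qed simp
  then show ?thesis unfolding pb_def h_def by simp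
qed

lemma u_one: "pb S 1 = 0"
proof -
  have "{j \<in> S. j < 1} = {}" using Ssub by auto
  then show ?thesis unfolding pb_def by simp
qed

lemma u_step: "pb S (Suc p) = pb S p + (if p \<in> S then 1 else 0)"
  using pb_Suc[OF fS] .

lemma u_mono: "p \<le> q \<Longrightarrow> pb S p \<le> pb S q"
  using pb_mono[OF fS] .

lemma A_iff: "p \<in> {1..n-1} \<Longrightarrow> pb S p < t \<longleftrightarrow> p \<le> A t"
  unfolding A_def using pb_lt_iff[OF fS] .

lemma A_ge: "t \<le> n - 1 \<Longrightarrow> t \<le> A t"
proof -
  assume t: "t \<le> n - 1"
  have "{1..t} \<subseteq> {p \<in> {1..n-1}. pb S p < t}"
  proof
    fix p assume p: "p \<in> {1..t}"
    have "pb S p \<le> p - 1" by (rule u_le_pm1)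
    then show "p \<in> {p \<in> {1..n-1}. pb S p < t}" using p t by auto
  qed
  then have "card {1..t} \<le> card {p \<in> {1..n-1}. pb S p < t}" by (intro card_mono) auto
  then show ?thesis unfolding A_def bst_def by simp
qed

lemma A_le: "A t \<le> n - 1" unfolding A_def by (rule bst_le)

lemma A_mono: "t \<le> t' \<Longrightarrow> A t \<le> A t'" unfolding A_def by (rule bst_mono)

lemma A_top: "A (Suc h) = n - 1"
proof -
  have "{p \<in> {1..n-1}. pb S p < Suc h} = {1..n-1}" using u_le_h by (auto simp: less_Suc_eq_le)
  then show ?thesis unfolding A_def bst_def by simp
qed

lemma u_hits: "t \<le> h \<Longrightarrow> \<exists>p. 1 \<le> p \<and> p \<le> n - 1 \<and> pb S p = t"
proof -
  assume t: "t \<le> h"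
  have "pb S 1 \<le> t" using u_one by simp
  moreover have "t \<le> pb S (n - 1)" using u_top[of "n-1"] t by simp
  moreover have "1 \<le> n - 1" using n2 by simp
  moreover have "pb S (Suc q) \<le> Suc (pb S q)" for q using u_step[of q] by simp
  ultimately show ?thesis using ivt_nat[of "pb S" 1 t "n - 1"] by blast
qed

lemma A_strict: "t \<le> h \<Longrightarrow> A t < A (Suc t)"
proof -
  assume t: "t \<le> h"
  obtain p where p: "1 \<le> p" "p \<le> n - 1" "pb S p = t" using u_hits[OF t] by blast
  have pi: "p \<in> {1..n-1}" using p by simp
  have "p \<le> A (Suc t)" using A_iff[OF pi, of "Suc t"] p(3) by simp
  moreover have "\<not> p \<le> A t" using A_iff[OF pi, of t] p(3) by simp
  ultimately show ?thesis by simp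
qed

lemma len_lam: "length lam = h + 2" by (simp add: lam_def)
lemma len_mu: "length mu = h + 2" by (simp add: mu_def)

lemma nth_lam: "r < h + 2 \<Longrightarrow> lam ! r = LA r"
  unfolding lam_def by (subst nth_map_upt) auto
lemma nth_mu: "r < h + 2 \<Longrightarrow> mu ! r = MU r"
  unfolding mu_def by (subst nth_map_upt) auto
lemma part_lam: "part_at lam r = (if r < h + 2 then LA r else 0)"
  using nth_lam len_lam by (simp add: part_at_def)
lemma part_mu: "part_at mu r = (if r < h + 2 then MU r else 0)"
  using nth_mu len_mu by (simp add: part_at_def)

lemma LA_anti: "Suc r < h + 2 \<Longrightarrow> LA (Suc r) \<le> LA r"
proof -
  assume r: "Suc r < h + 2"
  show ?thesis
  proof (cases "r = 0")
    case True
    then show ?thesis using A_top h_le n2 by (simp add: LA_def)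
  next
    case False
    define t where "t = h + 1 - r"
    have t1: "1 \<le> t" "t \<le> h" using r False by (auto simp: t_def)
    have e1: "h + 2 - Suc r = t" "h + 1 - Suc r = t - 1" "h + 2 - r = Suc t" "h + 1 - r = t"
      using r False by (auto simp: t_def)
    have s: "A (t - 1) < A t" using A_strict[of "t - 1"] t1 by simp
    have s2: "A t < A (Suc t)" using A_strict t1 by simp
    have g: "t - 1 \<le> A (t - 1)" "t \<le> A t" using A_ge h_le t1 by auto
    have "A t - (t - 1) \<le> A (Suc t) - t" using s2 g t1 by arith
    then show ?thesis unfolding LA_def using False e1 by simp
  qed
qed

lemma MU_anti: "Suc r < h + 2 \<Longrightarrow> MU (Suc r) \<le> MU r"
proof -
  assume r: "Suc r < h + 2"
  show ?thesis
  proof (cases "r = 0")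
    case True
    then show ?thesis using A_le[of h] A_ge[of h] h_le n2 by (simp add: MU_def)
  next
    case False
    define t where "t = h + 1 - r"
    have t1: "1 \<le> t" "t \<le> h" using r False by (auto simp: t_def)
    have e1: "h + 1 - Suc r = t - 1" "h + 1 - r = t"
      using r False by (auto simp: t_def)
    have s: "A (t - 1) < A t" using A_strict[of "t - 1"] t1 by simp
    have g: "t - 1 \<le> A (t - 1)" "t \<le> A t" using A_ge h_le t1 by auto
    have "A (t - 1) - (t - 1) \<le> A t - t" using s g t1 by arith
    then show ?thesis unfolding MU_def using False e1 by simp
  qed
qed

lemma MU_le_LA: "MU r \<le> LA r"
proof (cases "r = 0")
  case True then show ?thesis by (simp add: MU_def LA_def)
next
  case False
  have "A (h + 1 - r) \<le> A (h + 2 - r)" by (rule A_mono) simp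
  then show ?thesis using False by (simp add: MU_def LA_def)
qed

lemma skew: "skew_shape lam mu"
proof -
  have p1: "is_partition lam"
    unfolding is_partition_def
  proof
    show "sorted_wrt (\<ge>) lam" unfolding lam_def by (rule sorted_wrt_ge_map) (rule LA_anti)
    show "\<forall>x\<in>set lam. 0 < x" by (auto simp: lam_def LA_def)
  qed
  have p2: "is_partition mu"
    unfolding is_partition_def
  proof
    show "sorted_wrt (\<ge>) mu" unfolding mu_def by (rule sorted_wrt_ge_map) (rule MU_anti)
    show "\<forall>x\<in>set mu. 0 < x" using h_le n2 by (auto simp: mu_def MU_def)
  qed
  have "\<forall>i < length mu. mu ! i \<le> lam ! i" using MU_le_LA nth_lam nth_mu len_mu by simp
  then show ?thesis unfolding skew_shape_def using p1 p2 len_lam len_mu by simp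
qed

end

context rib
begin

lemma cc_n: "cc n = (0, n - h)" by (simp add: cc_def)
lemma cc_r: "p \<noteq> n \<Longrightarrow> cc p = (h + 1 - pb S p, p - pb S p)" by (simp add: cc_def)

lemma cc_in_cells: "p \<in> {1..n} \<Longrightarrow> cc p \<in> cells lam mu"
proof -
  assume p: "p \<in> {1..n}"
  show ?thesis
  proof (cases "p = n")
    case True
    have "cc p = (0, n - h)" using True cc_n by simp
    then show ?thesis unfolding cells_def len_lam part_lam part_mu
      by (simp add: LA_def MU_def)
  next
    case False
    define t where "t = pb S p"
    have pi: "p \<in> {1..n-1}" using p False by auto
    have th: "t \<le> h" using u_le_h t_def by simp
    have tp: "t \<le> p - 1" using u_le_pm1 t_def by simp
    have a1: "\<not> p \<le> A t" using A_iff[OF pi, of t] t_def by simp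
    have a2: "p \<le> A (Suc t)" using A_iff[OF pi, of "Suc t"] t_def by simp
    have ag: "t \<le> A t" using A_ge[of t] th h_le n2 by simp
    define r where "r = h + 1 - t"
    have r: "r \<noteq> 0" "r < h + 2" "h + 1 - r = t" "h + 2 - r = Suc t" using th by (auto simp: r_def)
    have "MU r = A t - t + 1" "LA r = A (Suc t) - t + 1" using r by (simp_all add: MU_def LA_def)
    then have "MU r \<le> p - t" "p - t < LA r" using a1 a2 ag tp pi by auto
    then show ?thesis unfolding cells_def cc_r[OF False] len_lam part_lam part_mu
      using r by (simp add: t_def r_def)
  qed
qed

lemma cells_sub: "cells lam mu \<subseteq> cc ` {1..n}"
proof
  fix x assume x: "x \<in> cells lam mu"
  obtain i j where ij: "x = (i, j)" by (cases x)
  have i: "i < h + 2" "MU i \<le> j" "j < LA i" using x unfolding ij cells_def len_lam part_lam part_mu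
    by (auto split: if_splits)
  show "x \<in> cc ` {1..n}"
  proof (cases "i = 0")
    case True
    then have "j = n - h" using i by (simp add: MU_def LA_def)
    then have "x = cc n" using True ij cc_n by simp
    then show ?thesis using n2 by auto
  next
    case False
    define t where "t = h + 1 - i"
    have th: "t \<le> h" "h + 1 - t = i" using i(1) False by (auto simp: t_def)
    have mu_i: "MU i = A t - t + 1" and la_i: "LA i = A (Suc t) - t + 1"
      using False i(1) by (simp_all add: MU_def LA_def t_def Suc_diff_le)
    have ag: "t \<le> A t" using A_ge[of t] th h_le n2 by simp
    define p where "p = j + t"
    have p1: "A t < p" "p \<le> A (Suc t)" using i(2,3) mu_i la_i ag by (auto simp: p_def)
    have pn: "p \<le> n - 1" using p1(2) A_le[of "Suc t"] by simp
    have pge: "1 \<le> p" using p1(1) by simp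
    have pi: "p \<in> {1..n-1}" using pn pge by simp
    have "pb S p < Suc t" using A_iff[OF pi] p1(2) by simp
    moreover have "\<not> pb S p < t" using A_iff[OF pi] p1(1) by simp
    ultimately have ut: "pb S p = t" by simp
    have pnn: "p \<noteq> n" using pn n2 by simp
    have "cc p = (i, j)" using cc_r[OF pnn] ut th by (simp add: p_def)
    then show ?thesis using ij pi n2 by force
  qed
qed

lemma cells_eq: "cells lam mu = cc ` {1..n}"
  using cells_sub cc_in_cells by blast

lemma cc_inj: "inj_on cc {1..n}"
proof (rule inj_onI)
  fix p q assume p: "p \<in> {1..n}" and q: "q \<in> {1..n}" and e: "cc p = cc q"
  have up: "pb S p \<le> h" "pb S q \<le> h" using u_le_h by auto
  show "p = q"
  proof (cases "p = n")
    case True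
    show ?thesis
    proof (rule ccontr)
      assume "p \<noteq> q"
      then have "q \<noteq> n" using True by simp
      then show False using e True cc_n cc_r up by auto
    qed
  next
    case False
    show ?thesis
    proof (cases "q = n")
      case True then show ?thesis using e False cc_n cc_r up by auto
    next
      case False
      then have "h + 1 - pb S p = h + 1 - pb S q" "p - pb S p = q - pb S q"
        using e cc_r \<open>p \<noteq> n\<close> by auto
      then have "pb S p = pb S q" using up by simp
      moreover have "pb S p \<le> p - 1" "pb S q \<le> q - 1" using u_le_pm1 by auto
      ultimately show ?thesis using \<open>p - pb S p = q - pb S q\<close> p q by auto
    qed
  qed
qed

lemma card_cells: "card (cells lam mu) = n"
  unfolding cells_eq using card_image[OF cc_inj] by simp

lemma col_mono: "1 \<le> p \<Longrightarrow> p \<le> q \<Longrightarrow> p - pb S p \<le> q - pb S q"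
proof (induction q)
  case 0 then show ?case by simp
next
  case (Suc q)
  show ?case
  proof (cases "p = Suc q")
    case True then show ?thesis by simp
  next
    case False
    then have ih: "p - pb S p \<le> q - pb S q" using Suc by simp
    have "pb S q \<le> q - 1" by (rule u_le_pm1)
    moreover have "pb S (Suc q) \<le> pb S q + 1" using u_step[of q] by simp
    ultimately have "q - pb S q \<le> Suc q - pb S (Suc q)" using Suc.prems False by arith
    then show ?thesis using ih by simp
  qed
qed

lemma col_bound: "p \<in> {1..n-1} \<Longrightarrow> p - pb S p \<le> n - 1 - h"
  using col_mono[of p "n - 1"] u_top[of "n-1"] by simp

lemma row_lemma:
  assumes s: "\<sigma> \<in> Lcl n S" and p: "p1 < p2" "p1 \<in> {1..n}" "p2 \<in> {1..n}"
    and e: "fst (cc p1) = fst (cc p2)"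
  shows "\<sigma> p1 < \<sigma> p2"
proof -
  have sp: "\<sigma> permutes {1..n}" and ld: "ldes n \<sigma> = S" using s by (auto simp: Lcl_def Pn_def)
  have p1n: "p1 \<noteq> n" using p by auto
  have p2n: "p2 \<noteq> n"
  proof
    assume "p2 = n"
    then have "fst (cc p1) = 0" using e cc_n by simp
    then show False using cc_r[OF p1n] u_le_h[of p1] by simp
  qed
  have "h + 1 - pb S p1 = h + 1 - pb S p2" using e cc_r[OF p1n] cc_r[OF p2n] by simp
  then have ue: "pb S p1 = pb S p2" using u_le_h[of p1] u_le_h[of p2] by simp
  show ?thesis
  proof (rule chain_lt[OF _ p(1)])
    fix r assume r: "p1 \<le> r" "r < p2"
    have rS: "r \<notin> S"
    proof
      assume "r \<in> S"
      then have "pb S (Suc r) = pb S r + 1" using u_step[of r] by simp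
      moreover have "pb S p1 \<le> pb S r" using u_mono r(1) by simp
      moreover have "pb S (Suc r) \<le> pb S p2" using u_mono r(2) by simp
      ultimately show False using ue by simp
    qed
    have r1: "r \<in> {1..n-2}" using r p p2n by auto
    have "r \<notin> ldes n \<sigma>" using rS ld by simp
    then have "\<not> \<sigma> (Suc r) < \<sigma> r" using r1 unfolding ldes_def by simp
    moreover have "\<sigma> (Suc r) \<noteq> \<sigma> r" using injD[OF permutes_inj[OF sp]] by fastforce
    ultimately show "\<sigma> r < \<sigma> (Suc r)" by simp
  qed
qed

lemma col_lemma:
  assumes s: "\<sigma> \<in> Lcl n S" and p: "p2 < p1" "p1 \<in> {1..n-1}" "p2 \<in> {1..n-1}"
    and e: "p1 - pb S p1 = p2 - pb S p2"
  shows "\<sigma> p1 < \<sigma> p2"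
proof -
  have sp: "\<sigma> permutes {1..n}" and ld: "ldes n \<sigma> = S" using s by (auto simp: Lcl_def Pn_def)
  show ?thesis
  proof (rule chain_gt[OF _ p(1)])
    fix r assume r: "p2 \<le> r" "r < p1"
    have rS: "r \<in> S"
    proof (rule ccontr)
      assume "r \<notin> S"
      then have us: "pb S (Suc r) = pb S r" using u_step[of r] by simp
      have "pb S r \<le> r - 1" by (rule u_le_pm1)
      then have "r - pb S r < Suc r - pb S (Suc r)" using us r p by auto
      moreover have "p2 - pb S p2 \<le> r - pb S r" using col_mono[of p2 r] r p by auto
      moreover have "Suc r - pb S (Suc r) \<le> p1 - pb S p1" using col_mono[of "Suc r" p1] r by auto
      ultimately show False using e by simp
    qed
    then have "r \<in> ldes n \<sigma>" using ld by simp
    then show "\<sigma> (Suc r) < \<sigma> r" unfolding ldes_def by simp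
  qed
qed

end

context rib
begin

definition Phi :: "((nat \<times> nat) \<Rightarrow> nat) \<Rightarrow> nat \<Rightarrow> nat" where
  "Phi T = (\<lambda>p. if p \<in> {1..n} then T (cc p) else p)"
definition Psi :: "(nat \<Rightarrow> nat) \<Rightarrow> (nat \<times> nat) \<Rightarrow> nat" where
  "Psi \<sigma> = (\<lambda>x. if x \<in> cells lam mu then \<sigma> (inv_into {1..n} cc x) else 0)"

lemma Phi_out: "x \<notin> {1..n} \<Longrightarrow> Phi T x = x"
  unfolding Phi_def by (rule if_not_P)

lemma SYT_out: "T \<in> SYT lam mu \<Longrightarrow> x \<notin> cells lam mu \<Longrightarrow> T x = 0"
  unfolding SYT_def by blast

lemma cc_bij: "bij_betw cc {1..n} (cells lam mu)"
  using cc_inj cells_eq by (simp add: bij_betw_def)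

lemma row_n: "p \<in> {1..n} \<Longrightarrow> fst (cc p) = 0 \<longleftrightarrow> p = n"
proof -
  assume p: "p \<in> {1..n}"
  show ?thesis
  proof (cases "p = n")
    case True then show ?thesis using cc_n by simp
  next
    case False then show ?thesis using cc_r[OF False] u_le_h[of p] by simp
  qed
qed

lemma row_anti: "p \<in> {1..n} \<Longrightarrow> q \<in> {1..n} \<Longrightarrow> p \<le> q \<Longrightarrow> fst (cc q) \<le> fst (cc p)"
proof -
  assume p: "p \<in> {1..n}" and q: "q \<in> {1..n}" and pq: "p \<le> q"
  show ?thesis
  proof (cases "q = n")
    case True then show ?thesis using cc_n by simp
  next
    case False
    then have "p \<noteq> n" using pq q by auto
    then show ?thesis using cc_r[OF False] cc_r[of p] u_mono[OF pq] by simp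
  qed
qed

lemma Phi_Lcl:
  assumes T: "T \<in> SYT lam mu"
  shows "Phi T \<in> Lcl n S"
proof -
  have Tb: "bij_betw T (cells lam mu) {1..n}" using T card_cells by (simp add: SYT_def)
  have Trow: "\<And>x y. x \<in> cells lam mu \<Longrightarrow> y \<in> cells lam mu \<Longrightarrow> fst x = fst y \<Longrightarrow> snd x < snd y \<Longrightarrow> T x < T y"
    using T by (simp add: SYT_def)
  have Tcol: "\<And>x y. x \<in> cells lam mu \<Longrightarrow> y \<in> cells lam mu \<Longrightarrow> snd x = snd y \<Longrightarrow> fst x < fst y \<Longrightarrow> T x < T y"
    using T by (simp add: SYT_def)
  have b: "bij_betw (T \<circ> cc) {1..n} {1..n}" using bij_betw_trans[OF cc_bij Tb] .
  have b2: "bij_betw (Phi T) {1..n} {1..n}"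
    using b by (rule bij_betw_cong[THEN iffD1, rotated]) (simp add: Phi_def)
  have pp: "Phi T permutes {1..n}"
    by (rule bij_imp_permutes[OF b2]) (rule Phi_out)
  have "ldes n (Phi T) = S"
  proof (intro set_eqI iffI)
    fix p assume "p \<in> ldes n (Phi T)"
    then have p: "p \<in> {1..n-2}" "Phi T (Suc p) < Phi T p" unfolding ldes_def by auto
    show "p \<in> S"
    proof (rule ccontr)
      assume pS: "p \<notin> S"
      have pn: "p \<noteq> n" "Suc p \<noteq> n" using p n2 by auto
      have us: "pb S (Suc p) = pb S p" using u_step[of p] pS by simp
      have "pb S p \<le> p - 1" by (rule u_le_pm1)
      then have e: "fst (cc p) = fst (cc (Suc p))" "snd (cc p) < snd (cc (Suc p))"
        using cc_r[OF pn(1)] cc_r[OF pn(2)] us p by auto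
      have c: "cc p \<in> cells lam mu" "cc (Suc p) \<in> cells lam mu" using cc_in_cells p n2 by auto
      have "T (cc p) < T (cc (Suc p))" by (rule Trow[OF c e])
      moreover have "Phi T p = T (cc p)" "Phi T (Suc p) = T (cc (Suc p))" using p n2 by (auto simp: Phi_def)
      ultimately show False using p(2) by simp
    qed
  next
    fix p assume pS: "p \<in> S"
    then have p: "p \<in> {1..n-2}" using Ssub by auto
    have pn: "p \<noteq> n" "Suc p \<noteq> n" using p n2 by auto
    have us: "pb S (Suc p) = Suc (pb S p)" using u_step[of p] pS by simp
    have uh: "pb S (Suc p) \<le> h" by (rule u_le_h)
    have "pb S p \<le> p - 1" by (rule u_le_pm1)
    then have e: "snd (cc (Suc p)) = snd (cc p)" "fst (cc (Suc p)) < fst (cc p)"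
      using cc_r[OF pn(1)] cc_r[OF pn(2)] us uh p by auto
    have c: "cc p \<in> cells lam mu" "cc (Suc p) \<in> cells lam mu" using cc_in_cells p n2 by auto
    have "T (cc (Suc p)) < T (cc p)" by (rule Tcol[OF c(2) c(1) e])
    moreover have "Phi T p = T (cc p)" "Phi T (Suc p) = T (cc (Suc p))" using p n2 by (auto simp: Phi_def)
    ultimately show "p \<in> ldes n (Phi T)" using p unfolding ldes_def by simp
  qed
  then show ?thesis using pp by (simp add: Lcl_def Pn_def)
qed

lemma Psi_cc: "p \<in> {1..n} \<Longrightarrow> Psi \<sigma> (cc p) = \<sigma> p"
  using cc_in_cells inv_into_f_f[OF cc_inj] by (simp add: Psi_def)

lemma Psi_SYT:
  assumes s: "\<sigma> \<in> Lcl n S"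
  shows "Psi \<sigma> \<in> SYT lam mu" and "Phi (Psi \<sigma>) = \<sigma>"
proof -
  have sp: "\<sigma> permutes {1..n}" using s by (simp add: Lcl_def Pn_def)
  have sb: "bij_betw \<sigma> {1..n} {1..n}" using permutes_imp_bij[OF sp] .
  have ib: "bij_betw (inv_into {1..n} cc) (cells lam mu) {1..n}" using bij_betw_inv_into[OF cc_bij] .
  have b: "bij_betw (\<sigma> \<circ> inv_into {1..n} cc) (cells lam mu) {1..n}" using bij_betw_trans[OF ib sb] .
  have b2: "bij_betw (Psi \<sigma>) (cells lam mu) {1..card (cells lam mu)}"
    unfolding card_cells using b by (rule bij_betw_cong[THEN iffD1, rotated]) (simp add: Psi_def)
  have mono: "(fst x = fst y \<and> snd x < snd y \<longrightarrow> Psi \<sigma> x < Psi \<sigma> y) \<and>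
              (snd x = snd y \<and> fst x < fst y \<longrightarrow> Psi \<sigma> x < Psi \<sigma> y)"
    if x: "x \<in> cells lam mu" and y: "y \<in> cells lam mu" for x y
  proof -
    obtain p1 where p1: "p1 \<in> {1..n}" "x = cc p1" using x cells_eq by auto
    obtain p2 where p2: "p2 \<in> {1..n}" "y = cc p2" using y cells_eq by auto
    have vx: "Psi \<sigma> x = \<sigma> p1" and vy: "Psi \<sigma> y = \<sigma> p2" using Psi_cc p1 p2 by auto
    show ?thesis
    proof (intro conjI impI)
      assume a: "fst x = fst y \<and> snd x < snd y"
      have "p1 \<noteq> p2" using a p1 p2 by auto
      have ne: "p1 \<noteq> n" "p2 \<noteq> n"
      proof -
        show "p1 \<noteq> n"
        proof
          assume "p1 = n"
          then have "fst (cc p2) = 0" using a p1 p2 cc_n by simp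
          then have "p2 = n" using row_n[OF p2(1)] by simp
          then show False using \<open>p1 = n\<close> \<open>p1 \<noteq> p2\<close> by simp
        qed
        show "p2 \<noteq> n"
        proof
          assume "p2 = n"
          then have "fst (cc p1) = 0" using a p1 p2 cc_n by simp
          then have "p1 = n" using row_n[OF p1(1)] by simp
          then show False using \<open>p2 = n\<close> \<open>p1 \<noteq> p2\<close> by simp
        qed
      qed
      have r: "h + 1 - pb S p1 = h + 1 - pb S p2" using a p1 p2 cc_r[OF ne(1)] cc_r[OF ne(2)] by simp
      have "pb S p1 = pb S p2" using r u_le_h[of p1] u_le_h[of p2] by arith
      then have "p1 < p2" using a p1 p2 cc_r[OF ne(1)] cc_r[OF ne(2)] u_le_pm1[of p1] u_le_pm1[of p2] by auto
      then have "\<sigma> p1 < \<sigma> p2" using row_lemma[OF s _ p1(1) p2(1)] a p1 p2 by simp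
      then show "Psi \<sigma> x < Psi \<sigma> y" using vx vy by simp
    next
      assume a: "snd x = snd y \<and> fst x < fst y"
      have ne2: "p2 \<noteq> n" using a p2 cc_n by auto
      have ne1: "p1 \<noteq> n"
      proof
        assume "p1 = n"
        then have "snd (cc p2) = n - h" using a p1 p2 cc_n by simp
        moreover have "p2 \<in> {1..n-1}" using p2 ne2 by auto
        then have cb: "p2 - pb S p2 \<le> n - 1 - h" by (rule col_bound)
        have c2: "snd (cc p2) = p2 - pb S p2" using cc_r[OF ne2] by simp
        show False using cb c2 \<open>snd (cc p2) = n - h\<close> h_le n2 by arith
      qed
      have "h + 1 - pb S p1 < h + 1 - pb S p2" using a p1 p2 cc_r[OF ne1] cc_r[OF ne2] by simp
      then have "pb S p2 < pb S p1" by simp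
      then have "p2 < p1" using u_mono[of p1 p2] by (meson not_le)
      moreover have "p1 - pb S p1 = p2 - pb S p2" using a p1 p2 cc_r[OF ne1] cc_r[OF ne2] by simp
      moreover have "p1 \<in> {1..n-1}" "p2 \<in> {1..n-1}" using p1 p2 ne1 ne2 by auto
      ultimately have "\<sigma> p1 < \<sigma> p2" using col_lemma[OF s] by blast
      then show "Psi \<sigma> x < Psi \<sigma> y" using vx vy by simp
    qed
  qed
  have out: "Psi \<sigma> x = 0" if "x \<notin> cells lam mu" for x using that by (simp add: Psi_def)
  show "Psi \<sigma> \<in> SYT lam mu" unfolding SYT_def using b2 mono out by blast
  show "Phi (Psi \<sigma>) = \<sigma>"
  proof
    fix p show "Phi (Psi \<sigma>) p = \<sigma> p"
    proof (cases "p \<in> {1..n}")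
      case True then show ?thesis using Psi_cc by (simp add: Phi_def)
    next
      case False then show ?thesis using Phi_out[OF False] permutes_not_in[OF sp False] by simp
    qed
  qed
qed

lemma Phi_inj: "inj_on Phi (SYT lam mu)"
proof (rule inj_onI)
  fix T1 T2 assume t1: "T1 \<in> SYT lam mu" and t2: "T2 \<in> SYT lam mu" and e: "Phi T1 = Phi T2"
  show "T1 = T2"
  proof
    fix x show "T1 x = T2 x"
    proof (cases "x \<in> cells lam mu")
      case True
      then obtain p where p: "p \<in> {1..n}" "x = cc p" using cells_eq by auto
      have "Phi T1 p = Phi T2 p" using e by simp
      then show ?thesis using p by (simp add: Phi_def)
    next
      case False then show ?thesis using SYT_out[OF t1 False] SYT_out[OF t2 False] by simp
    qed
  qed
qed

lemma Phi_bij: "bij_betw Phi (SYT lam mu) (Lcl n S)"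
proof -
  have "Phi ` SYT lam mu = Lcl n S"
  proof
    show "Phi ` SYT lam mu \<subseteq> Lcl n S" using Phi_Lcl by auto
    show "Lcl n S \<subseteq> Phi ` SYT lam mu"
    proof
      fix \<sigma> assume s: "\<sigma> \<in> Lcl n S"
      then show "\<sigma> \<in> Phi ` SYT lam mu" using Psi_SYT[OF s] by (metis image_eqI)
    qed
  qed
  then show ?thesis using Phi_inj by (simp add: bij_betw_def)
qed

lemma Des_Phi:
  assumes T: "T \<in> SYT lam mu"
  shows "tab_Des lam mu T = ides n (Phi T)"
proof -
  define \<sigma> where "\<sigma> = Phi T"
  have s: "\<sigma> \<in> Lcl n S" using Phi_Lcl[OF T] by (simp add: \<sigma>_def)
  have sp: "\<sigma> permutes {1..n}" using s by (simp add: Lcl_def Pn_def)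
  have Tinj: "inj_on T (cells lam mu)" using T by (simp add: SYT_def bij_betw_def)
  have key: "(\<exists>x\<in>cells lam mu. \<exists>y\<in>cells lam mu. T x = i \<and> T y = i + 1 \<and> fst x < fst y)
      \<longleftrightarrow> inv \<sigma> (Suc i) < inv \<sigma> i" if i: "i \<in> {1..n-1}" for i
  proof -
    have i1: "i \<in> {1..n}" "Suc i \<in> {1..n}" using i by auto
    define a where "a = inv \<sigma> i"
    define b where "b = inv \<sigma> (Suc i)"
    have a: "a \<in> {1..n}" "\<sigma> a = i" using perm_inv_in[OF sp i1(1)] permutes_inverses(1)[OF sp] a_def by auto
    have b: "b \<in> {1..n}" "\<sigma> b = Suc i" using perm_inv_in[OF sp i1(2)] permutes_inverses(1)[OF sp] b_def by auto
    have Ta: "T (cc a) = i" using a by (simp add: \<sigma>_def Phi_def)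
    have Tb: "T (cc b) = Suc i" using b by (simp add: \<sigma>_def Phi_def)
    have ca: "cc a \<in> cells lam mu" "cc b \<in> cells lam mu" using cc_in_cells a b by auto
    have uniq: "x = cc a" if "x \<in> cells lam mu" "T x = i" for x using inj_onD[OF Tinj _ that(1) ca(1)] that Ta by simp
    have uniqb: "y = cc b" if "y \<in> cells lam mu" "T y = Suc i" for y using inj_onD[OF Tinj _ that(1) ca(2)] that Tb by simp
    have "(\<exists>x\<in>cells lam mu. \<exists>y\<in>cells lam mu. T x = i \<and> T y = i + 1 \<and> fst x < fst y)
        \<longleftrightarrow> fst (cc a) < fst (cc b)"
    proof
      assume "\<exists>x\<in>cells lam mu. \<exists>y\<in>cells lam mu. T x = i \<and> T y = i + 1 \<and> fst x < fst y"
      then obtain x y where xy: "x \<in> cells lam mu" "y \<in> cells lam mu" "T x = i" "T y = Suc i" "fst x < fst y"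
        by auto
      have "x = cc a" by (rule uniq[OF xy(1) xy(3)])
      moreover have "y = cc b" by (rule uniqb[OF xy(2) xy(4)])
      ultimately show "fst (cc a) < fst (cc b)" using xy(5) by simp
    next
      assume "fst (cc a) < fst (cc b)"
      then show "\<exists>x\<in>cells lam mu. \<exists>y\<in>cells lam mu. T x = i \<and> T y = i + 1 \<and> fst x < fst y"
        using ca Ta Tb by auto
    qed
    also have "\<dots> \<longleftrightarrow> b < a"
    proof
      assume "fst (cc a) < fst (cc b)"
      then show "b < a" using row_anti[OF a(1) b(1)] by (meson not_le)
    next
      assume ba: "b < a"
      have le: "fst (cc a) \<le> fst (cc b)" using row_anti[OF b(1) a(1)] ba by simp
      have "fst (cc a) \<noteq> fst (cc b)"
      proof
        assume "fst (cc a) = fst (cc b)"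
        then have "\<sigma> b < \<sigma> a" using row_lemma[OF s ba b(1) a(1)] by simp
        then show False using a b by simp
      qed
      then show "fst (cc a) < fst (cc b)" using le by simp
    qed
    finally show ?thesis by (simp add: a_def b_def)
  qed
  show ?thesis unfolding tab_Des_def ides_def card_cells \<sigma>_def[symmetric]
  proof (intro Collect_cong conj_cong refl)
    fix i assume "i \<in> {1..n-1}"
    then show "(\<exists>x\<in>cells lam mu. \<exists>y\<in>cells lam mu. T x = i \<and> T y = i + 1 \<and> fst x < fst y)
      = (inv \<sigma> (Suc i) < inv \<sigma> i)" by (rule key)
  qed
qed

lemma finite_SYT: "finite (SYT lam mu)"
proof -
  have "finite (Lcl n S)" using finite_Pn by (simp add: Lcl_def)
  then show ?thesis using Phi_bij bij_betw_finite by blast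
qed

lemma SYT_Des_mset:
  "image_mset (tab_Des lam mu) (mset_set (SYT lam mu)) = image_mset (ides n) (mset_set (Lcl n S))"
proof -
  have "image_mset (tab_Des lam mu) (mset_set (SYT lam mu)) = image_mset (ides n \<circ> Phi) (mset_set (SYT lam mu))"
    by (rule image_mset_cong) (use Des_Phi finite_SYT in auto)
  also have "\<dots> = image_mset (ides n) (image_mset Phi (mset_set (SYT lam mu)))"
    by (simp only: multiset.map_comp)
  also have "image_mset Phi (mset_set (SYT lam mu)) = mset_set (Lcl n S)"
    using image_mset_mset_set[OF Phi_inj] Phi_bij by (simp add: bij_betw_def)
  finally show ?thesis .
qed

lemma not_ribbon: "\<not> connected_ribbon lam mu"
proof
  assume cr: "connected_ribbon lam mu"
  define R where "R = (\<lambda>x y. x \<in> cells lam mu \<and> y \<in> cells lam mu \<and> adjacent x y)"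
  have one: "(1::nat) \<in> {1..n}" "n \<in> {1..n}" using n2 by auto
  have "R\<^sup>*\<^sup>* (cc 1) (cc n)" using cr cc_in_cells[OF one(1)] cc_in_cells[OF one(2)]
    unfolding connected_ribbon_def R_def by blast
  moreover have "R\<^sup>*\<^sup>* (cc 1) y \<Longrightarrow> y \<in> cc ` {1..n-1}" for y
  proof (induction rule: rtranclp_induct)
    case base then show ?case using n2 by auto
  next
    case (step y z)
    obtain p where p: "p \<in> {1..n-1}" "y = cc p" using step.IH by auto
    have zc: "z \<in> cells lam mu" "adjacent y z" using step.hyps(2) unfolding R_def by auto
    obtain q where q: "q \<in> {1..n}" "z = cc q" using zc(1) cells_eq by auto
    have "q \<noteq> n"
    proof
      assume "q = n"
      then have z: "z = (0, n - h)" using q cc_n by simp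
      have pn: "p \<noteq> n" using p n2 by auto
      have y: "fst y = h + 1 - pb S p" "snd y = p - pb S p" using p cc_r[OF pn] by auto
      have "1 \<le> fst y" using y u_le_h[of p] by simp
      moreover have "snd y \<le> n - 1 - h" using y col_bound[OF p(1)] by simp
      ultimately show False using zc(2) z h_le n2 unfolding adjacent_def by auto
    qed
    then show ?case using q by auto
  qed
  ultimately have "cc n \<in> cc ` {1..n-1}" by blast
  then obtain p where "p \<in> {1..n-1}" "cc n = cc p" by auto
  then have "n = p" using inj_onD[OF cc_inj] one(2) by force
  then show False using \<open>p \<in> {1..n-1}\<close> n2 by simp
qed

lemma recover: "(\<lambda>t. part_at mu (length lam - 1 - t) + t - 1) ` {1..length lam - 2} = S"
proof -
  have AS: "(\<lambda>t. A t) ` {1..h} = S"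
  proof (intro set_eqI iffI)
    fix q assume "q \<in> (\<lambda>t. A t) ` {1..h}"
    then obtain t where t: "t \<in> {1..h}" "q = A t" by auto
    have "t \<le> n - 1" using t h_le n2 by auto
    then have ag: "t \<le> A t" by (rule A_ge)
    have q1: "1 \<le> q" using ag t by simp
    have nl: "n - 1 \<in> {1..n-1}" using n2 by simp
    have "\<not> n - 1 \<le> A t" using A_iff[OF nl, of t] u_top[of "n-1"] t by simp
    then have qn: "q \<le> n - 2" using t by simp
    have qi: "q \<in> {1..n-1}" "Suc q \<in> {1..n-1}" using q1 qn n2 by auto
    have "pb S q < t" using A_iff[OF qi(1)] t by simp
    moreover have "\<not> pb S (Suc q) < t" using A_iff[OF qi(2)] t by simp
    ultimately show "q \<in> S" using u_step[of q] by (auto split: if_splits)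
  next
    fix q assume qS: "q \<in> S"
    then have q: "q \<in> {1..n-2}" using Ssub by auto
    define t where "t = Suc (pb S q)"
    have us: "pb S (Suc q) = t" using u_step[of q] qS t_def by simp
    have th: "t \<in> {1..h}" using us u_le_h[of "Suc q"] t_def by simp
    have qi: "q \<in> {1..n-1}" "Suc q \<in> {1..n-1}" using q by auto
    have "q \<le> A t" using A_iff[OF qi(1), of t] t_def by simp
    moreover have "\<not> Suc q \<le> A t" using A_iff[OF qi(2), of t] us by simp
    ultimately have "A t = q" by simp
    then show "q \<in> (\<lambda>t. A t) ` {1..h}" using th by force
  qed
  have "part_at mu (length lam - 1 - t) + t - 1 = A t" if t: "t \<in> {1..h}" for t
  proof -
    have r: "length lam - 1 - t = h + 1 - t" "h + 1 - t < h + 2" "h + 1 - t \<noteq> 0" using t len_lam by auto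
    have "t \<le> n - 1" using t h_le n2 by auto
    then have ag: "t \<le> A t" by (rule A_ge)
    have "MU (h + 1 - t) = A t - t + 1" using r t by (simp add: MU_def)
    then show ?thesis using r ag part_mu by simp
  qed
  moreover have "length lam - 2 = h" using len_lam by simp
  ultimately show ?thesis using AS by (metis (no_types, lifting) image_cong)
qed

end

lemma shape_facts:
  assumes n: "2 \<le> n" and S: "S \<subseteq> {1..n-2}"
  shows "skew_shape (rib.lam n S) (rib.mu n S)"
    and "card (cells (rib.lam n S) (rib.mu n S)) = n"
    and "\<not> connected_ribbon (rib.lam n S) (rib.mu n S)"
    and "finite (SYT (rib.lam n S) (rib.mu n S))"
    and "image_mset (tab_Des (rib.lam n S) (rib.mu n S)) (mset_set (SYT (rib.lam n S) (rib.mu n S)))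
         = image_mset (ides n) (mset_set (Lcl n S))"
    and "(\<lambda>t. part_at (rib.mu n S) (length (rib.lam n S) - 1 - t) + t - 1) ` {1..length (rib.lam n S) - 2} = S"
proof -
  interpret rib n S by (unfold_locales) (fact n, fact S)
  show "skew_shape lam mu" by (rule skew)
  show "card (cells lam mu) = n" by (rule card_cells)
  show "\<not> connected_ribbon lam mu" by (rule not_ribbon)
  show "finite (SYT lam mu)" by (rule finite_SYT)
  show "image_mset (tab_Des lam mu) (mset_set (SYT lam mu)) = image_mset (ides n) (mset_set (Lcl n S))"
    by (rule SYT_Des_mset)
  show "(\<lambda>t. part_at mu (length lam - 1 - t) + t - 1) ` {1..length lam - 2} = S" by (rule recover)
qed

theorem corollary3p12:
  fixes n k :: nat
  assumes "1 \<le> k" and "k < n"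
  shows "cyclic_Schur_positive n (C_set n k)"
proof -
  have n: "2 \<le> n" using assms by simp
  define Ss where "Ss = {S. S \<subseteq> {1..n-2} \<and> card S = k - 1}"
  define shp where "shp = (\<lambda>S. (rib.lam n S, rib.mu n S))"
  define F where "F = (\<lambda>\<sigma>::nat \<Rightarrow> nat. perm_cDes n (inv \<sigma>))"
  define N where "N = (\<lambda>S. image_mset F (mset_set (Acl n S)))"
  have finSs: "finite Ss" unfolding Ss_def by (rule finite_subset[of _ "Pow {1..n-2}"]) auto
  have injshp: "inj_on shp Ss"
  proof (rule inj_onI)
    fix S1 S2 assume s1: "S1 \<in> Ss" and s2: "S2 \<in> Ss" and e: "shp S1 = shp S2"
    have el: "rib.lam n S1 = rib.lam n S2" and em: "rib.mu n S1 = rib.mu n S2"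
      using e unfolding shp_def by simp_all
    have sub1: "S1 \<subseteq> {1..n-2}" using s1 unfolding Ss_def by simp
    have sub2: "S2 \<subseteq> {1..n-2}" using s2 unfolding Ss_def by simp
    have r1: "(\<lambda>t. part_at (rib.mu n S1) (length (rib.lam n S1) - 1 - t) + t - 1) ` {1..length (rib.lam n S1) - 2} = S1"
      by (rule shape_facts(6)[OF n sub1])
    have r2: "(\<lambda>t. part_at (rib.mu n S2) (length (rib.lam n S2) - 1 - t) + t - 1) ` {1..length (rib.lam n S2) - 2} = S2"
      by (rule shape_facts(6)[OF n sub2])
    show "S1 = S2" using r1 r2 unfolding el em by simp
  qed
  have lift: "\<exists>cD \<psi>. cyclic_descent_ext n (SYT (fst (shp S)) (snd (shp S))) (tab_Des (fst (shp S)) (snd (shp S))) cD \<psi>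
      \<and> image_mset cD (mset_set (SYT (fst (shp S)) (snd (shp S)))) = N S" if S: "S \<in> Ss" for S
  proof -
    have Ssub: "S \<subseteq> {1..n-2}" using S by (simp add: Ss_def)
    have finA: "finite (Acl n S)" using finite_Pn by (simp add: Acl_def)
    have good: "\<forall>z\<in>Acl n S. F z \<subseteq> {1..n} \<and> F z \<noteq> {} \<and> F z \<noteq> {1..n}"
      using cDes_good[OF n] by (auto simp: F_def Acl_def Pn_def)
    have restr: "image_mset (\<lambda>z. F z \<inter> {1..n-1}) (mset_set (Acl n S))
        = image_mset (tab_Des (fst (shp S)) (snd (shp S))) (mset_set (SYT (fst (shp S)) (snd (shp S))))"
    proof -
      have "image_mset (\<lambda>z. F z \<inter> {1..n-1}) (mset_set (Acl n S)) = image_mset (ides n) (mset_set (Acl n S))"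
        unfolding F_def by (rule image_mset_cong) (rule cDes_restr)
      also have "\<dots> = image_mset (ides n) (mset_set (Lcl n S))" using LA_eq[OF n Ssub] by simp
      also have "\<dots> = image_mset (tab_Des (fst (shp S)) (snd (shp S))) (mset_set (SYT (fst (shp S)) (snd (shp S))))"
        using shape_facts(5)[OF n Ssub] by (simp add: shp_def)
      finally show ?thesis .
    qed
    have shift: "image_mset (cshift n \<circ> F) (mset_set (Acl n S)) = image_mset F (mset_set (Acl n S))"
      using Acl_shift[OF n] by (simp add: F_def)
    show ?thesis unfolding N_def
      by (rule lift_lemma[OF _ finA shift good restr]) (use shape_facts(4)[OF n Ssub] in \<open>simp add: shp_def\<close>)
  qed
  define cD where "cD = (\<lambda>s. SOME c. \<exists>\<psi>. cyclic_descent_ext n (SYT (fst s) (snd s)) (tab_Des (fst s) (snd s)) c \<psi>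
      \<and> image_mset c (mset_set (SYT (fst s) (snd s))) = N (inv_into Ss shp s))"
  have cDprop: "(\<exists>\<psi>. cyclic_descent_ext n (SYT (fst (shp S)) (snd (shp S))) (tab_Des (fst (shp S)) (snd (shp S))) (cD (shp S)) \<psi>)
      \<and> image_mset (cD (shp S)) (mset_set (SYT (fst (shp S)) (snd (shp S)))) = N S" if S: "S \<in> Ss" for S
  proof -
    have ii: "inv_into Ss shp (shp S) = S" using inv_into_f_f[OF injshp S] .
    have "\<exists>c. \<exists>\<psi>. cyclic_descent_ext n (SYT (fst (shp S)) (snd (shp S))) (tab_Des (fst (shp S)) (snd (shp S))) c \<psi>
      \<and> image_mset c (mset_set (SYT (fst (shp S)) (snd (shp S)))) = N (inv_into Ss shp (shp S))"
      using lift[OF S] ii by auto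
    from someI_ex[OF this] show ?thesis unfolding cD_def ii by blast
  qed
  define shapes where "shapes = image_mset shp (mset_set Ss)"
  show ?thesis unfolding cyclic_Schur_positive_def
  proof (intro exI[of _ shapes] exI[of _ cD] conjI ballI)
    fix s assume "s \<in># shapes"
    then obtain S where S: "S \<in> Ss" "s = shp S" using finSs by (auto simp: shapes_def)
    have Ssub: "S \<subseteq> {1..n-2}" using S by (simp add: Ss_def)
    show "skew_shape (fst s) (snd s)" using shape_facts(1)[OF n Ssub] S by (simp add: shp_def)
    show "card (cells (fst s) (snd s)) = n" using shape_facts(2)[OF n Ssub] S by (simp add: shp_def)
    show "\<not> connected_ribbon (fst s) (snd s)" using shape_facts(3)[OF n Ssub] S by (simp add: shp_def)
    show "\<exists>\<psi>. cyclic_descent_ext n (SYT (fst s) (snd s)) (tab_Des (fst s) (snd s)) (cD s) \<psi>"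
      using cDprop[OF S(1)] S(2) by simp
  next
    have "image_mset (perm_cDes n) (mset_set (C_set n k)) = (\<Sum>S\<in>Ss. N S)"
      using M_decomp[OF n assms(1)] by (simp add: Ss_def N_def F_def)
    also have "\<dots> = (\<Sum>S\<in>Ss. image_mset (cD (shp S)) (mset_set (SYT (fst (shp S)) (snd (shp S)))))"
      by (rule sum.cong[OF refl]) (use cDprop in simp)
    also have "\<dots> = (\<Sum>s\<in>#shapes. image_mset (cD s) (mset_set (SYT (fst s) (snd s))))"
      unfolding shapes_def by (simp add: sum_unfold_sum_mset multiset.map_comp comp_def)
    finally show "image_mset (perm_cDes n) (mset_set (C_set n k))
        = (\<Sum>s\<in>#shapes. image_mset (cD s) (mset_set (SYT (fst s) (snd s))))" .
  qed
qed

end
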